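(* Let $S$ be a countable discrete inverse semigroup with identity and $\alpha\colon S\to\mathcal I(X)$ a representation such that $X$ is $S$-domain measurable. Then there is a sequence $(P_n)$ of nonzero finite-rank orthogonal projections in $\mathcal R_X$ such that $\|P_nT-TP_n\|_2/\|P_n\|_2\to0$ for every $T\in\mathcal R_X$, where $\|\cdot\|_2$ is the Hilbert–Schmidt norm.
   Context: Inverse semigroup: each $s$ has a unique $s^*$ with $ss^*s=s$, $s^*ss^*=s^*$. A representation is a unital homomorphism $\alpha\colon S\to\mathcal I(X)$ into partial bijections of $X$; $D_{s^*s}$ is the domain of $\alpha_s$. $X$ is $S$-domain measurable if there is a finitely additive $\mu\colon\mathcal P(X)\to[0,\infty]$ with $\mu(X)=1$ and $\mu(B)=\mu(\alpha_s(B))$ for all $s$, $B\subseteq D_{s^*s}$. $V_s\delta_x=\delta_{\alpha_s(x)}$ if $x\in D_{s^*s}$, else $0$, on $\ell^2(X)$; $\mathcal R_X$ is the C*-algebra generated by $\{V_s\}$ and $\ell^\infty(X)$ acting by multiplication. *)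

theory Defs
  imports "HOL-Analysis.Analysis"
begin

definition inverse_monoid :: "('s::monoid_mult) itself \<Rightarrow> bool" where
  "inverse_monoid _ \<longleftrightarrow> (\<forall>s::'s. \<exists>!t. s * t * s = s \<and> t * s * t = t)"

definition partial_bij :: "('x \<rightharpoonup> 'x) \<Rightarrow> bool" where
  "partial_bij f \<longleftrightarrow> inj_on f (dom f)"

definition representation :: "('s::monoid_mult \<Rightarrow> ('x \<rightharpoonup> 'x)) \<Rightarrow> bool" where
  "representation \<alpha> \<longleftrightarrow>
     (\<forall>s. partial_bij (\<alpha> s)) \<and>
     \<alpha> 1 = Some \<and>
     (\<forall>s t. \<alpha> (s * t) = \<alpha> s \<circ>\<^sub>m \<alpha> t)"

definition domain_measurable :: "('s::monoid_mult \<Rightarrow> ('x \<rightharpoonup> 'x)) \<Rightarrow> bool" where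
  "domain_measurable \<alpha> \<longleftrightarrow>
     (\<exists>\<mu> :: 'x set \<Rightarrow> ennreal.
        (\<forall>A B. A \<inter> B = {} \<longrightarrow> \<mu> (A \<union> B) = \<mu> A + \<mu> B) \<and>
        \<mu> UNIV = 1 \<and>
        (\<forall>s B. B \<subseteq> dom (\<alpha> s) \<longrightarrow> \<mu> B = \<mu> (ran (\<alpha> s |` B))))"

text \<open>A (bounded) operator T on l^2(X) is represented by its matrix
K x y = <delta_x, T delta_y>.\<close>
type_synonym 'x mat = "'x \<Rightarrow> 'x \<Rightarrow> complex"

definition supp :: "('x \<Rightarrow> complex) \<Rightarrow> 'x set" where
  "supp v = {x. v x \<noteq> 0}"

definition vnorm2 :: "('x \<Rightarrow> complex) \<Rightarrow> real" where
  "vnorm2 v = (\<Sum>x\<in>supp v. (cmod (v x))\<^sup>2)"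

definition op_vals :: "'x mat \<Rightarrow> real set" where
  "op_vals K = {cmod (\<Sum>x\<in>supp u. \<Sum>y\<in>supp v. cnj (u x) * K x y * v y) | u v.
                 finite (supp u) \<and> finite (supp v) \<and> vnorm2 u \<le> 1 \<and> vnorm2 v \<le> 1}"

definition bounded_mat :: "'x mat \<Rightarrow> bool" where
  "bounded_mat K \<longleftrightarrow> bdd_above (op_vals K)"

definition op_norm :: "'x mat \<Rightarrow> real" where
  "op_norm K = Sup (op_vals K)"

definition mat_add :: "'x mat \<Rightarrow> 'x mat \<Rightarrow> 'x mat" where
  "mat_add A B = (\<lambda>x y. A x y + B x y)"

definition mat_diff :: "'x mat \<Rightarrow> 'x mat \<Rightarrow> 'x mat" where
  "mat_diff A B = (\<lambda>x y. A x y - B x y)"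

definition mat_scale :: "complex \<Rightarrow> 'x mat \<Rightarrow> 'x mat" where
  "mat_scale c A = (\<lambda>x y. c * A x y)"

definition mat_mult :: "'x mat \<Rightarrow> 'x mat \<Rightarrow> 'x mat" where
  "mat_mult A B = (\<lambda>x z. \<Sum>\<^sub>\<infinity>y. A x y * B y z)"

definition mat_adj :: "'x mat \<Rightarrow> 'x mat" where
  "mat_adj A = (\<lambda>x y. cnj (A y x))"

definition mat_zero :: "'x mat" where
  "mat_zero = (\<lambda>x y. 0)"

definition cstar_gen :: "'x mat set \<Rightarrow> 'x mat set" where
  "cstar_gen G = \<Inter>{A. G \<subseteq> A \<and> A \<subseteq> Collect bounded_mat \<and>
      (\<forall>a\<in>A. \<forall>b\<in>A. mat_add a b \<in> A \<and> mat_mult a b \<in> A) \<and>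
      (\<forall>c. \<forall>a\<in>A. mat_scale c a \<in> A) \<and>
      (\<forall>a\<in>A. mat_adj a \<in> A) \<and>
      (\<forall>f K. (\<forall>n. f n \<in> A) \<and> bounded_mat K \<and>
              (\<lambda>n. op_norm (mat_diff (f n) K)) \<longlonglongrightarrow> 0 \<longrightarrow> K \<in> A)}"

text \<open>V_s delta_x = delta_{alpha_s x} if x in dom alpha_s, else 0.\<close>
definition V_op :: "('s \<Rightarrow> ('x \<rightharpoonup> 'x)) \<Rightarrow> 's \<Rightarrow> 'x mat" where
  "V_op \<alpha> s = (\<lambda>y x. if \<alpha> s x = Some y then 1 else 0)"

definition mult_op :: "('x \<Rightarrow> complex) \<Rightarrow> 'x mat" where
  "mult_op f = (\<lambda>y x. if x = y then f x else 0)"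

definition R_X :: "('s \<Rightarrow> ('x \<rightharpoonup> 'x)) \<Rightarrow> 'x mat set" where
  "R_X \<alpha> = cstar_gen (range (V_op \<alpha>) \<union>
                       {mult_op f | f. \<exists>C. \<forall>x. cmod (f x) \<le> C})"

definition orth_proj :: "'x mat \<Rightarrow> bool" where
  "orth_proj P \<longleftrightarrow> bounded_mat P \<and> mat_mult P P = P \<and> mat_adj P = P"

definition finite_rank :: "'x mat \<Rightarrow> bool" where
  "finite_rank K \<longleftrightarrow> (\<exists>(n::nat) (b :: nat \<Rightarrow> 'x \<Rightarrow> complex).
      \<forall>y. \<exists>c :: nat \<Rightarrow> complex. \<forall>x. K x y = (\<Sum>i<n. c i * b i x))"

definition hs_norm :: "'x mat \<Rightarrow> real" where
  "hs_norm K = sqrt (\<Sum>\<^sub>\<infinity>p\<in>UNIV. (cmod (K (fst p) (snd p)))\<^sup>2)"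

end

theory Submission
  imports Defs "HOL-Library.Extended_Nonnegative_Real"
begin

lemma chain_finite_max:
  assumes "finite B" "B \<noteq> {}" "B \<subseteq> C" "C \<in> chains Fam"
  shows "\<exists>D\<in>B. \<forall>D'\<in>B. D' \<subseteq> D"
  using assms
proof (induction B rule: finite_ne_induct)
  case (singleton x) then show ?case by auto
next
  case (insert x F)
  then obtain D where D: "D \<in> F" "\<forall>D'\<in>F. D' \<subseteq> D" by auto
  have "x \<subseteq> D \<or> D \<subseteq> x" using chainsD[OF insert(6)] insert(5) D(1) by auto
  then show ?case using D by blast
qed

definition hallP :: "('l \<Rightarrow> 'r set) \<Rightarrow> bool" where
  "hallP M \<longleftrightarrow> (\<forall>L. finite L \<longrightarrow> card L \<le> card (\<Union>(M ` L)))"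

lemma hall_infinite:
  fixes N :: "'l \<Rightarrow> 'r set"
  assumes fin: "\<And>l. finite (N l)"
    and hall: "\<And>L. finite L \<Longrightarrow> card L \<le> card (\<Union>(N ` L))"
  shows "\<exists>m. inj m \<and> (\<forall>l. m l \<in> N l)"
proof -
  define MD where "MD D = (\<lambda>l. {r \<in> N l. (l,r) \<notin> D})" for D :: "('l \<times> 'r) set"
  define Fam where "Fam = {D. hallP (MD D)}"
  have finMD: "finite (MD D l)" for D l unfolding MD_def by (rule finite_subset[OF _ fin]) blast
  have "\<forall>C\<in>chains Fam. \<exists>U\<in>Fam. \<forall>X\<in>C. X \<subseteq> U"
  proof
    fix C assume C: "C \<in> chains Fam"
    have CF: "C \<subseteq> Fam" using C chainsD2 by blast
    have "\<Union>C \<in> Fam" unfolding Fam_def hallP_def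
    proof (intro CollectI allI impI)
      fix L :: "'l set" assume L: "finite L"
      define R0 where "R0 = \<Union>(N ` L)"
      have R0: "finite R0" unfolding R0_def by (rule finite_UN_I[OF L fin])
      define E where "E = (\<Union>C) \<inter> (L \<times> R0)"
      have finE: "finite E" unfolding E_def by (rule finite_Int[OF disjI2]) (rule finite_cartesian_product[OF L R0])
      show "card L \<le> card (\<Union>(MD (\<Union>C) ` L))"
      proof (cases "E = {}")
        case True
        have "MD (\<Union>C) l = N l" if l: "l \<in> L" for l
        proof
          show "MD (\<Union>C) l \<subseteq> N l" unfolding MD_def by blast
          show "N l \<subseteq> MD (\<Union>C) l"
          proof
            fix r assume r: "r \<in> N l"
            have "(l, r) \<notin> \<Union>C"
            proof
              assume "(l, r) \<in> \<Union>C"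
              moreover have "(l, r) \<in> L \<times> R0" using l r unfolding R0_def by blast
              ultimately have "(l, r) \<in> E" unfolding E_def by blast
              then show False using True by blast
            qed
            then show "r \<in> MD (\<Union>C) l" using r unfolding MD_def by blast
          qed
        qed
        then have "\<Union>(MD (\<Union>C) ` L) = \<Union>(N ` L)" by (rule SUP_cong[OF refl])
        then show ?thesis using hall[OF L] by (simp only:)
      next
        case False
        have "\<forall>e\<in>E. \<exists>D. D \<in> C \<and> e \<in> D" unfolding E_def by blast
        from bchoice[OF this] obtain g where g0: "\<forall>e\<in>E. g e \<in> C \<and> e \<in> g e" by blast
        have g: "\<And>e. e \<in> E \<Longrightarrow> g e \<in> C \<and> e \<in> g e" using g0 by blast
        obtain D0 where D0: "D0 \<in> g ` E" "\<forall>D'\<in>g ` E. D' \<subseteq> D0"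
          using chain_finite_max[of "g ` E" C Fam] finE False g C by blast
        from D0(1) obtain e0 where e0: "e0 \<in> E" "D0 = g e0" by blast
        have D0C: "D0 \<in> C" using g[OF e0(1)] e0(2) by blast
        have eq: "\<Union>(MD (\<Union>C) ` L) = \<Union>(MD D0 ` L)"
        proof -
          have "MD (\<Union>C) l = MD D0 l" if "l \<in> L" for l
          proof
            show "MD (\<Union>C) l \<subseteq> MD D0 l" using D0C unfolding MD_def by blast
            show "MD D0 l \<subseteq> MD (\<Union>C) l"
            proof
              fix r assume r: "r \<in> MD D0 l"
              show "r \<in> MD (\<Union>C) l"
              proof (rule ccontr)
                assume "r \<notin> MD (\<Union>C) l"
                then have lr: "(l,r) \<in> \<Union>C" "r \<in> N l" using r unfolding MD_def by blast+
                then have "(l,r) \<in> E" unfolding E_def R0_def using that by blast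
                then have "(l,r) \<in> D0" using g D0(2) by blast
                then show False using r unfolding MD_def by blast
              qed
            qed
          qed
          then show ?thesis by (meson SUP_cong)
        qed
        have "hallP (MD D0)" using D0C CF unfolding Fam_def by blast
        then have "card L \<le> card (\<Union>(MD D0 ` L))" using L unfolding hallP_def by blast
        then show ?thesis unfolding eq .
      qed
    qed
    then show "\<exists>U\<in>Fam. \<forall>X\<in>C. X \<subseteq> U" by blast
  qed
  from Zorn_Lemma2[OF this] obtain D where D: "D \<in> Fam" and maxD: "\<forall>X\<in>Fam. D \<subseteq> X \<longrightarrow> X = D" by blast
  define M where "M = MD D"
  have hM: "hallP M" using D unfolding Fam_def M_def by auto
  have single: "\<exists>r. M l = {r}" for l
  proof -
    have "card {l} \<le> card (M l)" using hM[unfolded hallP_def, rule_format, of "{l}"] by simp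
    then have ne: "M l \<noteq> {}" by auto
    have le1: "card (M l) \<le> 1"
    proof (rule ccontr)
      assume "\<not> card (M l) \<le> 1"
      then obtain r1 r2 where r12: "r1 \<in> M l" "r2 \<in> M l" "r1 \<noteq> r2"
        using card_le_Suc0_iff_eq[OF finMD[of D l]] unfolding M_def by (metis One_nat_def)
      have bad: "\<exists>L1. finite L1 \<and> l \<in> L1 \<and> card (\<Union>(M ` (L1 - {l})) \<union> (M l - {r})) < card L1"
        if r: "r \<in> M l" for r
      proof -
        define D1 where "D1 = insert (l,r) D"
        have "D1 \<noteq> D" using r unfolding D1_def M_def MD_def by auto
        moreover have "D \<subseteq> D1" unfolding D1_def by auto
        ultimately have "D1 \<notin> Fam" using maxD by blast
        then obtain L1 where L1: "finite L1" "card (\<Union>(MD D1 ` L1)) < card L1"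
          unfolding Fam_def hallP_def by (auto simp: not_le)
        have MD1: "MD D1 l' = (if l' = l then M l - {r} else M l')" for l'
          unfolding D1_def M_def MD_def by auto
        have "l \<in> L1"
        proof (rule ccontr)
          assume "l \<notin> L1"
          then have "\<Union>(MD D1 ` L1) = \<Union>(M ` L1)" using MD1 by auto
          then show False using L1 hM unfolding hallP_def by (metis not_le)
        qed
        moreover have "\<Union>(MD D1 ` L1) = \<Union>(M ` (L1 - {l})) \<union> (M l - {r})"
          using MD1 \<open>l \<in> L1\<close> by (auto split: if_splits)
        ultimately show ?thesis using L1 by auto
      qed
      obtain L1 where L1: "finite L1" "l \<in> L1" "card (\<Union>(M ` (L1 - {l})) \<union> (M l - {r1})) < card L1"
        using bad[OF r12(1)] by blast
      obtain L2 where L2: "finite L2" "l \<in> L2" "card (\<Union>(M ` (L2 - {l})) \<union> (M l - {r2})) < card L2"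
        using bad[OF r12(2)] by blast
      define B1 where "B1 = L1 - {l}"
      define B2 where "B2 = L2 - {l}"
      define U1 where "U1 = \<Union>(M ` B1) \<union> (M l - {r1})"
      define U2 where "U2 = \<Union>(M ` B2) \<union> (M l - {r2})"
      have fB: "finite B1" "finite B2" using L1 L2 B1_def B2_def by auto
      have cB1: "card L1 = Suc (card B1)" using L1 unfolding B1_def by (metis card_Suc_Diff1)
      have cB2: "card L2 = Suc (card B2)" using L2 unfolding B2_def by (metis card_Suc_Diff1)
      have cU1: "card U1 \<le> card B1" using L1(3) cB1 unfolding U1_def B1_def by linarith
      have cU2: "card U2 \<le> card B2" using L2(3) cB2 unfolding U2_def B2_def by linarith
      have fM: "finite (M x)" for x unfolding M_def by (rule finMD)
      have fU: "finite U1" "finite U2" unfolding U1_def U2_def using fB fM by auto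
      have lB: "l \<notin> B1" "l \<notin> B2" unfolding B1_def B2_def by auto
      have s1: "\<Union>(M ` (insert l (B1 \<union> B2))) \<subseteq> U1 \<union> U2"
        unfolding U1_def U2_def using r12(3) by auto
      have s2: "\<Union>(M ` (B1 \<inter> B2)) \<subseteq> U1 \<inter> U2"
        unfolding U1_def U2_def by auto
      have h1: "card (insert l (B1 \<union> B2)) \<le> card (U1 \<union> U2)"
        using hM fB s1 fU unfolding hallP_def
        by (meson card_mono finite.insertI finite_Un le_trans)
      have h2: "card (B1 \<inter> B2) \<le> card (U1 \<inter> U2)"
        using hM fB s2 fU unfolding hallP_def
        by (meson card_mono finite_Int finite_Un le_trans)
      have "card (insert l (B1 \<union> B2)) = Suc (card (B1 \<union> B2))" using fB lB by simp
      moreover have "card (B1 \<union> B2) + card (B1 \<inter> B2) = card B1 + card B2"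
        using card_Un_Int[OF fB] by simp
      moreover have "card (U1 \<union> U2) + card (U1 \<inter> U2) = card U1 + card U2"
        using card_Un_Int[OF fU] by simp
      ultimately show False using h1 h2 cU1 cU2 by linarith
    qed
    have "card (M l) > 0" using ne finMD[of D l] unfolding M_def by (simp add: card_gt_0_iff)
    then have "card (M l) = 1" using le1 by linarith
    then show ?thesis by (simp add: card_1_singleton_iff)
  qed
  define m where "m l = (SOME r. M l = {r})" for l
  have m: "M l = {m l}" for l unfolding m_def using someI_ex[OF single] .
  have "inj m"
  proof (rule injI)
    fix l l' assume eq: "m l = m l'"
    show "l = l'"
    proof (rule ccontr)
      assume ne: "l \<noteq> l'"
      have "card {l,l'} \<le> card (\<Union>(M ` {l,l'}))" using hM[unfolded hallP_def, rule_format, of "{l,l'}"] by simp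
      moreover have "card {l,l'} = 2" using ne by simp
      moreover have "\<Union>(M ` {l,l'}) = {m l}" using m eq by auto
      ultimately show False by simp
    qed
  qed
  moreover have "m l \<in> N l" for l using m[of l] unfolding M_def MD_def by (metis (no_types, lifting) insertI1 mem_Collect_eq)
  ultimately show ?thesis by blast
qed

definition img :: "('x \<rightharpoonup> 'x) \<Rightarrow> 'x set \<Rightarrow> 'x set" where
  "img h B = {y. \<exists>x\<in>B. h x = Some y}"

definition invm :: "('x \<rightharpoonup> 'x) \<Rightarrow> ('x \<rightharpoonup> 'x)" where
  "invm g y = (if \<exists>x. g x = Some y then Some (THE x. g x = Some y) else None)"

fun walk :: "('x \<rightharpoonup> 'x) list \<Rightarrow> 'x \<rightharpoonup> 'x" where
  "walk [] x = Some x"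
| "walk (h # hs) x = (case h x of None \<Rightarrow> None | Some y \<Rightarrow> walk hs y)"

lemma walk_append1: "walk (hs @ [h]) x = (case walk hs x of None \<Rightarrow> None | Some z \<Rightarrow> h z)"
  by (induction hs arbitrary: x) (auto split: option.splits)

definition bd :: "('x \<rightharpoonup> 'x) \<Rightarrow> 'x set \<Rightarrow> 'x set" where
  "bd g A = {x. \<exists>y. g x = Some y \<and> (y \<in> A) \<noteq> (x \<in> A)}"

lemma img_ran: "ran (g |` B) = img g B"
proof (intro set_eqI iffI)
  fix y assume "y \<in> ran (g |` B)"
  then obtain x where "(g |` B) x = Some y" unfolding ran_def by auto
  then show "y \<in> img g B" unfolding img_def by (auto simp: restrict_map_def split: if_splits)
next
  fix y assume "y \<in> img g B"
  then obtain x where "x \<in> B" "g x = Some y" unfolding img_def by auto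
  then have "(g |` B) x = Some y" by simp
  then show "y \<in> ran (g |` B)" unfolding ran_def by blast
qed

lemma invm_Some:
  assumes "inj_on g (dom g)" "g x = Some y"
  shows "invm g y = Some x"
proof -
  have "(THE x. g x = Some y) = x"
    using assms by (intro the_equality) (auto simp: inj_on_def domI)
  then show ?thesis using assms unfolding invm_def by auto
qed

lemma invm_SomeD:
  assumes "inj_on g (dom g)" "invm g y = Some x"
  shows "g x = Some y"
proof -
  obtain x' where x': "g x' = Some y" using assms(2) unfolding invm_def by (auto split: if_splits)
  then show ?thesis using invm_Some[OF assms(1) x'] assms(2) by simp
qed

locale mean =
  fixes \<mu> :: "'x set \<Rightarrow> ennreal"
  assumes add: "\<And>A B. A \<inter> B = {} \<Longrightarrow> \<mu> (A \<union> B) = \<mu> A + \<mu> B"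
    and univ: "\<mu> UNIV = 1"
begin

lemma empty: "\<mu> {} = 0"
proof -
  have "\<mu> UNIV = \<mu> UNIV + \<mu> {}" using add[of UNIV "{}"] by simp
  then show ?thesis using univ by simp
qed

lemma mono: "A \<subseteq> B \<Longrightarrow> \<mu> A \<le> \<mu> B"
proof -
  assume "A \<subseteq> B"
  then have "\<mu> B = \<mu> A + \<mu> (B - A)" using add[of A "B - A"] by (simp add: Un_absorb1)
  then show ?thesis by simp
qed

lemma fin_add:
  assumes "finite I" "disjoint_family_on C I"
  shows "\<mu> (\<Union>i\<in>I. C i) = (\<Sum>i\<in>I. \<mu> (C i))"
  using assms
proof (induction I rule: finite_induct)
  case empty then show ?case by (simp add: mean.empty mean_axioms)
next
  case (insert i I)
  have d: "disjoint_family_on C I" using insert(4) by (meson disjoint_family_on_mono subset_insertI)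
  have "C i \<inter> (\<Union>j\<in>I. C j) = {}" using insert(2,4) unfolding disjoint_family_on_def by auto
  then have "\<mu> (\<Union>j\<in>insert i I. C j) = \<mu> (C i) + \<mu> (\<Union>j\<in>I. C j)" using add by simp
  then show ?case using insert(1,2) insert.IH[OF d] by simp
qed

end

locale folner_setup = mean \<mu> for \<mu> :: "'x set \<Rightarrow> ennreal" +
  fixes G :: "('x \<rightharpoonup> 'x) set"
  assumes finG: "finite G"
    and injG: "\<And>g. g \<in> G \<Longrightarrow> inj_on g (dom g)"
    and invG: "\<And>g B. g \<in> G \<Longrightarrow> B \<subseteq> dom g \<Longrightarrow> \<mu> B = \<mu> (img g B)"
begin

definition H :: "('x \<rightharpoonup> 'x) set" where
  "H = insert Some (G \<union> invm ` G)"

lemma finH: "finite H" unfolding H_def using finG by auto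

lemma invH: "h \<in> H \<Longrightarrow> B \<subseteq> dom h \<Longrightarrow> \<mu> B = \<mu> (img h B)"
proof -
  assume h: "h \<in> H" and B: "B \<subseteq> dom h"
  consider "h = Some" | "h \<in> G" | g where "g \<in> G" "h = invm g" using h unfolding H_def by auto
  then show ?thesis
  proof cases
    case 1 then show ?thesis by (simp add: img_def)
  next
    case 2 then show ?thesis using invG B by auto
  next
    case 3
    define C where "C = img h B"
    have C: "C \<subseteq> dom g" using 3 injG[OF 3(1)] unfolding C_def img_def
      by (auto dest: invm_SomeD)
    have "img g C = B"
    proof
      show "img g C \<subseteq> B" using 3 injG[OF 3(1)] unfolding C_def img_def
        by (auto dest!: invm_SomeD simp: inj_on_def domI)
         (metis domI invm_SomeD inj_on_def option.inject)
      show "B \<subseteq> img g C"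
      proof
        fix y assume y: "y \<in> B"
        then obtain x where x: "h y = Some x" using B by auto
        then have "g x = Some y" using 3 injG[OF 3(1)] invm_SomeD by metis
        then show "y \<in> img g C" using x y unfolding C_def img_def by auto
      qed
    qed
    then show ?thesis using invG[OF 3(1) C] unfolding C_def by simp
  qed
qed

lemma invWalk: "set hs \<subseteq> H \<Longrightarrow> B \<subseteq> dom (walk hs) \<Longrightarrow> \<mu> B = \<mu> (img (walk hs) B)"
proof (induction hs arbitrary: B)
  case Nil then show ?case by (simp add: img_def)
next
  case (Cons h hs)
  have hH: "h \<in> H" using Cons by auto
  have B1: "B \<subseteq> dom h" using Cons(3) by (auto split: option.splits)
  define B' where "B' = img h B"
  have B': "B' \<subseteq> dom (walk hs)" using Cons(3) unfolding B'_def img_def by (auto split: option.splits)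
  have e: "img (walk (h # hs)) B = img (walk hs) B'"
    unfolding B'_def img_def by (auto split: option.splits)
  have "\<mu> B = \<mu> (img (walk hs) B')" using invH[OF hH B1] Cons.IH[OF _ B'] Cons(2) unfolding B'_def by auto
  then show ?case unfolding e .
qed

definition Nbr :: "'x set \<Rightarrow> 'x set" where
  "Nbr A = {y. \<exists>h\<in>H. \<exists>x\<in>A. h x = Some y}"

lemma Nbr_sup: "A \<subseteq> Nbr A"
  unfolding Nbr_def H_def by auto

lemma Nbr_fin: "finite A \<Longrightarrow> finite (Nbr A)"
proof -
  assume A: "finite A"
  have "Nbr A \<subseteq> (\<Union>h\<in>H. (\<lambda>x. the (h x)) ` A)" unfolding Nbr_def by force
  moreover have "finite (\<Union>h\<in>H. (\<lambda>x. the (h x)) ` A)" using A finH by auto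
  ultimately show ?thesis by (rule finite_subset)
qed

lemma Nbr_UN: "Nbr (\<Union>x\<in>A. f x) = (\<Union>x\<in>A. Nbr (f x))"
  unfolding Nbr_def by auto

lemma Nbrk_UN: "(Nbr ^^ k) A = (\<Union>x\<in>A. (Nbr ^^ k) {x})"
proof (induction k)
  case 0 then show ?case by auto
next
  case (Suc k)
  have "(Nbr ^^ Suc k) A = Nbr (\<Union>x\<in>A. (Nbr ^^ k) {x})" using Suc by simp
  also have "\<dots> = (\<Union>x\<in>A. (Nbr ^^ Suc k) {x})" by (simp add: Nbr_UN)
  finally show ?case .
qed

lemma Nbrk_fin: "finite A \<Longrightarrow> finite ((Nbr ^^ k) A)"
  by (induction k) (auto intro: Nbr_fin)

lemma Nbrk_walk: "y \<in> (Nbr ^^ k) A \<Longrightarrow> \<exists>x\<in>A. \<exists>hs. set hs \<subseteq> H \<and> length hs = k \<and> walk hs x = Some y"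
proof (induction k arbitrary: y)
  case 0 then show ?case by (intro bexI[of _ y]) (auto intro: exI[of _ "[]"])
next
  case (Suc k)
  then obtain h x' where h: "h \<in> H" "x' \<in> (Nbr ^^ k) A" "h x' = Some y" unfolding Nbr_def by auto
  then obtain x hs where x: "x \<in> A" "set hs \<subseteq> H" "length hs = k" "walk hs x = Some x'"
    using Suc.IH by blast
  have "walk (hs @ [h]) x = Some y" using x(4) h(3) by (simp add: walk_append1)
  then show ?case using x h by (intro bexI[of _ x] exI[of _ "hs @ [h]"]) auto
qed

lemma expand:
  assumes eps: "(\<epsilon>::real) > 0"
    and nof: "\<And>A. finite A \<Longrightarrow> A \<noteq> {} \<Longrightarrow> \<exists>g\<in>G. real (card (bd g A)) > \<epsilon> * card A"
    and A: "finite A"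
  shows "(1 + \<epsilon>/2) * card A \<le> card (Nbr A)"
proof (cases "A = {}")
  case True then show ?thesis by simp
next
  case False
  obtain g where g: "g \<in> G" "real (card (bd g A)) > \<epsilon> * card A" using nof[OF A False] by blast
  have ig: "inj_on g (dom g)" using injG[OF g(1)] .
  define P1 where "P1 = {x\<in>A. \<exists>y. g x = Some y \<and> y \<notin> A}"
  define P2 where "P2 = {x. x \<notin> A \<and> (\<exists>y\<in>A. g x = Some y)}"
  have fN: "finite (Nbr A)" using Nbr_fin[OF A] .
  have sub: "bd g A \<subseteq> P1 \<union> P2" unfolding bd_def P1_def P2_def by blast
  have P2N: "P2 \<subseteq> Nbr A - A"
  proof
    fix x assume x: "x \<in> P2"
    then obtain y where y: "y \<in> A" "g x = Some y" unfolding P2_def by auto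
    have iv: "invm g y = Some x" using invm_Some[OF ig y(2)] .
    have ih: "invm g \<in> H" unfolding H_def using g(1) by blast
    have "x \<in> Nbr A" unfolding Nbr_def using iv ih y(1) by blast
    moreover have "x \<notin> A" using x unfolding P2_def by blast
    ultimately show "x \<in> Nbr A - A" by blast
  qed
  have P1N: "(\<lambda>x. the (g x)) ` P1 \<subseteq> Nbr A - A"
  proof
    fix y assume "y \<in> (\<lambda>x. the (g x)) ` P1"
    then obtain x where x: "x \<in> P1" "y = the (g x)" by auto
    then have gx: "g x = Some y" "y \<notin> A" "x \<in> A" unfolding P1_def by auto
    have gH: "g \<in> H" unfolding H_def using g(1) by blast
    have "y \<in> Nbr A" unfolding Nbr_def using gx gH by blast
    then show "y \<in> Nbr A - A" using gx by blast
  qed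
  have injP1: "inj_on (\<lambda>x. the (g x)) P1"
  proof (rule inj_onI)
    fix x x' assume "x \<in> P1" "x' \<in> P1" "the (g x) = the (g x')"
    then obtain y y' where "g x = Some y" "g x' = Some y'" "y = y'" unfolding P1_def by auto
    then have "g x = g x'" "x \<in> dom g" "x' \<in> dom g" by auto
    then show "x = x'" using inj_onD[OF ig] by blast
  qed
  have fND: "finite (Nbr A - A)" using fN by auto
  have c1: "card P1 \<le> card (Nbr A - A)"
    using card_mono[OF fND P1N] card_image[OF injP1] by simp
  have c2: "card P2 \<le> card (Nbr A - A)" using card_mono[OF fND P2N] .
  have "P1 \<subseteq> A" unfolding P1_def by auto
  then have fP1: "finite P1" using A by (rule finite_subset)
  have fP2: "finite P2" using P2N fND by (rule finite_subset)
  have fP: "finite (P1 \<union> P2)" using fP1 fP2 by simp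
  have "card (bd g A) \<le> card (P1 \<union> P2)" using card_mono[OF fP sub] .
  also have "\<dots> \<le> card P1 + card P2" by (rule card_Un_le)
  finally have cb: "card (bd g A) \<le> 2 * card (Nbr A - A)" using c1 c2 by linarith
  have "card (Nbr A - A) = card (Nbr A) - card A" using card_Diff_subset[OF A Nbr_sup] .
  moreover have "card A \<le> card (Nbr A)" using card_mono[OF fN Nbr_sup] .
  ultimately have "real (card (Nbr A - A)) = real (card (Nbr A)) - real (card A)" by simp
  moreover have "real (card (bd g A)) \<le> real (2 * card (Nbr A - A))" using cb by (rule of_nat_mono)
  ultimately have "\<epsilon> * card A < 2 * (real (card (Nbr A)) - real (card A))" using g(2)
    by simp
  then show ?thesis by (simp add: algebra_simps)
qed

lemma expand_k:
  assumes eps: "(\<epsilon>::real) > 0"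
    and nof: "\<And>A. finite A \<Longrightarrow> A \<noteq> {} \<Longrightarrow> \<exists>g\<in>G. real (card (bd g A)) > \<epsilon> * card A"
    and A: "finite A"
  shows "(1 + \<epsilon>/2) ^ k * card A \<le> card ((Nbr ^^ k) A)"
proof (induction k)
  case 0 then show ?case by simp
next
  case (Suc k)
  have "(1 + \<epsilon>/2) ^ Suc k * card A = (1 + \<epsilon>/2) * ((1 + \<epsilon>/2) ^ k * card A)" by simp
  also have "\<dots> \<le> (1 + \<epsilon>/2) * card ((Nbr ^^ k) A)"
    using Suc eps by (intro mult_left_mono) auto
  also have "\<dots> \<le> card ((Nbr ^^ Suc k) A)"
    using expand[OF eps nof Nbrk_fin[OF A]] by simp
  finally show ?case .
qed

theorem folner:
  assumes eps: "(\<epsilon>::real) > 0"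
  shows "\<exists>A. finite A \<and> A \<noteq> {} \<and> (\<forall>g\<in>G. real (card (bd g A)) \<le> \<epsilon> * card A)"
proof (rule ccontr)
  assume "\<not> ?thesis"
  then have nof: "\<And>A. finite A \<Longrightarrow> A \<noteq> {} \<Longrightarrow> \<exists>g\<in>G. real (card (bd g A)) > \<epsilon> * card A"
    by (meson not_le)
  obtain k where k: "2 < (1 + \<epsilon>/2) ^ k" using real_arch_pow[of "1 + \<epsilon>/2" 2] eps by auto
  define N where "N p = (Nbr ^^ k) {fst p}" for p :: "'x \<times> bool"
  have finN: "finite (N p)" for p unfolding N_def by (rule Nbrk_fin) simp
  have hallc: "card L \<le> card (\<Union>(N ` L))" if L: "finite L" for L
  proof -
    define A where "A = fst ` L"
    have fA: "finite A" using L A_def by auto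
    have "L \<subseteq> A \<times> UNIV" unfolding A_def by force
    then have "card L \<le> card (A \<times> (UNIV :: bool set))" using fA by (intro card_mono) auto
    also have "\<dots> = 2 * card A" by (simp add: card_cartesian_product)
    finally have c1: "card L \<le> 2 * card A" .
    have eqU: "\<Union>(N ` L) = (Nbr ^^ k) A"
      unfolding N_def A_def by (subst Nbrk_UN) auto
    have "2 * real (card A) \<le> (1 + \<epsilon>/2) ^ k * card A" using k by (intro mult_right_mono) auto
    also have "\<dots> \<le> card ((Nbr ^^ k) A)" using expand_k[OF eps nof fA] .
    finally have "2 * card A \<le> card ((Nbr ^^ k) A)" by linarith
    then show ?thesis using c1 eqU by simp
  qed
  obtain m where m: "inj m" "\<And>p. m p \<in> N p" using hall_infinite[of N, OF finN hallc] by blast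
  define W where "W = {hs. set hs \<subseteq> H \<and> length hs = k}"
  have finW: "finite W" unfolding W_def using finH by (rule finite_lists_length_eq)
  have exw: "\<exists>hs\<in>W. walk hs (fst p) = Some (m p)" for p
    using Nbrk_walk[of "m p" k "{fst p}"] m(2)[of p] unfolding N_def W_def by auto
  define w where "w p = (SOME hs. hs \<in> W \<and> walk hs (fst p) = Some (m p))" for p
  have w: "w p \<in> W" "walk (w p) (fst p) = Some (m p)" for p
    using someI_ex[OF exw[of p, unfolded Bex_def]] unfolding w_def by auto
  have half: "\<mu> (range (\<lambda>x. m (x, i))) = 1" for i
  proof -
    define B where "B hs = {x. w (x, i) = hs}" for hs
    have UB: "(\<Union>hs\<in>W. B hs) = UNIV" unfolding B_def using w by auto
    have dB: "disjoint_family_on B W" unfolding disjoint_family_on_def B_def by auto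
    have imgB: "img (walk hs) (B hs) = (\<lambda>x. m (x, i)) ` B hs" for hs
      unfolding img_def B_def using w[of "(_, i)"] by force
    have "range (\<lambda>x. m (x, i)) = (\<lambda>x. m (x, i)) ` (\<Union>hs\<in>W. B hs)" using UB by simp
    also have "\<dots> = (\<Union>hs\<in>W. (\<lambda>x. m (x, i)) ` B hs)" by (rule image_UN)
    finally have Ur: "range (\<lambda>x. m (x, i)) = (\<Union>hs\<in>W. img (walk hs) (B hs))"
      using imgB by simp
    have dI: "disjoint_family_on (\<lambda>hs. img (walk hs) (B hs)) W"
      unfolding disjoint_family_on_def imgB
    proof (intro ballI impI)
      fix a b assume "a \<in> W" "b \<in> W" "a \<noteq> b"
      then have "B a \<inter> B b = {}" using dB unfolding disjoint_family_on_def by auto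
      then show "(\<lambda>x. m (x, i)) ` B a \<inter> (\<lambda>x. m (x, i)) ` B b = {}"
        using m(1) unfolding inj_def by (auto simp: disjoint_iff) (metis prod.inject)
    qed
    have sB: "B hs \<subseteq> dom (walk hs)" for hs unfolding B_def using w by (auto simp: domI)
    have setW: "hs \<in> W \<Longrightarrow> set hs \<subseteq> H" for hs unfolding W_def by auto
    have "\<mu> (range (\<lambda>x. m (x, i))) = (\<Sum>hs\<in>W. \<mu> (img (walk hs) (B hs)))"
      unfolding Ur using fin_add[OF finW dI] .
    also have "\<dots> = (\<Sum>hs\<in>W. \<mu> (B hs))"
      using invWalk[OF setW sB] by simp
    also have "\<dots> = \<mu> (\<Union>hs\<in>W. B hs)" using fin_add[OF finW dB] by simp
    finally show ?thesis using UB univ by simp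
  qed
  have disj: "range (\<lambda>x. m (x, True)) \<inter> range (\<lambda>x. m (x, False)) = {}"
    using m(1) unfolding inj_def by auto
  have "\<mu> (range (\<lambda>x. m (x, True)) \<union> range (\<lambda>x. m (x, False))) = 2"
    using add[OF disj] half by simp
  moreover have "\<mu> (range (\<lambda>x. m (x, True)) \<union> range (\<lambda>x. m (x, False))) \<le> 1"
    using mono[of _ UNIV] univ by simp
  ultimately show False by simp
qed

end

definition nrm :: "'x set \<Rightarrow> ('x \<Rightarrow> complex) \<Rightarrow> real" where
  "nrm U u = sqrt (\<Sum>x\<in>U. (cmod (u x))\<^sup>2)"

definition bl :: "'x mat \<Rightarrow> 'x set \<Rightarrow> 'x set \<Rightarrow> ('x \<Rightarrow> complex) \<Rightarrow> ('x \<Rightarrow> complex) \<Rightarrow> complex" where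
  "bl T U V u v = (\<Sum>x\<in>U. \<Sum>y\<in>V. cnj (u x) * T x y * v y)"

lemma nrm_nonneg: "nrm U u \<ge> 0"
  unfolding nrm_def by (simp add: sum_nonneg)

lemma nrm_sq: "(nrm U u)\<^sup>2 = (\<Sum>x\<in>U. (cmod (u x))\<^sup>2)"
  unfolding nrm_def by (simp add: sum_nonneg)

lemma op_vals_0: "0 \<in> op_vals T"
proof -
  have s: "supp (\<lambda>_. 0::complex) = {}" by (simp add: supp_def)
  show ?thesis unfolding op_vals_def
    by (rule CollectI, rule exI[of _ "\<lambda>_. 0"], rule exI[of _ "\<lambda>_. 0"]) (simp add: s vnorm2_def)
qed

lemma op_norm_nonneg: "bounded_mat T \<Longrightarrow> 0 \<le> op_norm T"
  unfolding op_norm_def bounded_mat_def using cSup_upper[OF op_vals_0] by blast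

lemma op_vals_le: "bounded_mat T \<Longrightarrow> c \<in> op_vals T \<Longrightarrow> c \<le> op_norm T"
  unfolding op_norm_def bounded_mat_def by (rule cSup_upper)

lemma sum_supp_eq:
  assumes "finite U" "supp u \<subseteq> U" "\<And>x. x \<in> U \<Longrightarrow> u x = 0 \<Longrightarrow> f x = 0"
  shows "sum f (supp u) = sum f U"
  by (rule sum.mono_neutral_left) (use assms in \<open>auto simp: supp_def\<close>)

lemma nrm_zero: "finite U \<Longrightarrow> nrm U u = 0 \<Longrightarrow> x \<in> U \<Longrightarrow> u x = 0"
proof -
  assume U: "finite U" and n: "nrm U u = 0" and x: "x \<in> U"
  have "(\<Sum>x\<in>U. (cmod (u x))\<^sup>2) = 0" using n unfolding nrm_def by simp
  then have "\<forall>x\<in>U. (cmod (u x))\<^sup>2 = 0" using sum_nonneg_eq_0_iff[OF U, of "\<lambda>x. (cmod (u x))\<^sup>2"] by simp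
  then show "u x = 0" using x by simp
qed

lemma BL:
  assumes T: "bounded_mat T" and U: "finite U" and V: "finite V"
  shows "cmod (bl T U V u v) \<le> op_norm T * nrm U u * nrm V v"
proof (cases "nrm U u = 0 \<or> nrm V v = 0")
  case True
  then have "bl T U V u v = 0" unfolding bl_def using nrm_zero[OF U, of u] nrm_zero[OF V, of v]
    by (auto intro!: sum.neutral)
  then show ?thesis using op_norm_nonneg[OF T] nrm_nonneg[of U u] nrm_nonneg[of V v] by (simp add: mult_nonneg_nonneg)
next
  case False
  define a where "a = nrm U u"
  define b where "b = nrm V v"
  have a: "a > 0" using False nrm_nonneg[of U u] unfolding a_def by linarith
  have b: "b > 0" using False nrm_nonneg[of V v] unfolding b_def by linarith
  define u' where "u' x = (if x \<in> U then u x / complex_of_real a else 0)" for x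
  define v' where "v' x = (if x \<in> V then v x / complex_of_real b else 0)" for x
  have su: "supp u' \<subseteq> U" unfolding supp_def u'_def by auto
  have sv: "supp v' \<subseteq> V" unfolding supp_def v'_def by auto
  have fu: "finite (supp u')" using su U by (rule finite_subset)
  have fv: "finite (supp v')" using sv V by (rule finite_subset)
  have vn: "vnorm2 u' = 1"
  proof -
    have "vnorm2 u' = (\<Sum>x\<in>U. (cmod (u' x))\<^sup>2)"
      unfolding vnorm2_def by (rule sum_supp_eq[OF U su]) simp
    also have "\<dots> = (\<Sum>x\<in>U. (cmod (u x))\<^sup>2 / a\<^sup>2)"
      by (rule sum.cong) (auto simp: u'_def norm_divide power_divide a_def nrm_nonneg)
    also have "\<dots> = a\<^sup>2 / a\<^sup>2" unfolding sum_divide_distrib[symmetric] a_def nrm_sq ..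
    finally show ?thesis using a by simp
  qed
  have vn': "vnorm2 v' = 1"
  proof -
    have "vnorm2 v' = (\<Sum>x\<in>V. (cmod (v' x))\<^sup>2)"
      unfolding vnorm2_def by (rule sum_supp_eq[OF V sv]) simp
    also have "\<dots> = (\<Sum>x\<in>V. (cmod (v x))\<^sup>2 / b\<^sup>2)"
      by (rule sum.cong) (auto simp: v'_def norm_divide power_divide b_def nrm_nonneg)
    also have "\<dots> = b\<^sup>2 / b\<^sup>2" unfolding sum_divide_distrib[symmetric] b_def nrm_sq ..
    finally show ?thesis using b by simp
  qed
  have val: "(\<Sum>x\<in>supp u'. \<Sum>y\<in>supp v'. cnj (u' x) * T x y * v' y) = bl T U V u v / complex_of_real (a * b)"
  proof -
    have "(\<Sum>x\<in>supp u'. \<Sum>y\<in>supp v'. cnj (u' x) * T x y * v' y) = (\<Sum>x\<in>U. \<Sum>y\<in>supp v'. cnj (u' x) * T x y * v' y)"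
      by (rule sum_supp_eq[OF U su]) simp
    also have "\<dots> = (\<Sum>x\<in>U. \<Sum>y\<in>V. cnj (u' x) * T x y * v' y)"
      by (rule sum.cong[OF refl], rule sum_supp_eq[OF V sv]) simp
    also have "\<dots> = (\<Sum>x\<in>U. \<Sum>y\<in>V. cnj (u x) * T x y * v y / complex_of_real (a * b))"
      by (intro sum.cong refl) (simp add: u'_def v'_def)
    also have "\<dots> = bl T U V u v / complex_of_real (a * b)"
      unfolding bl_def by (simp add: sum_divide_distrib)
    finally show ?thesis .
  qed
  have "cmod (bl T U V u v / complex_of_real (a * b)) \<in> op_vals T"
    unfolding op_vals_def using fu fv vn vn' val[symmetric]
    by (intro CollectI exI[of _ u'] exI[of _ v']) simp
  moreover have "cmod (complex_of_real (a * b)) = a * b" using a b by (metis norm_of_real abs_of_pos mult_pos_pos)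
  ultimately have "cmod (bl T U V u v) / (a * b) \<le> op_norm T"
    using op_vals_le[OF T] by (simp only: norm_divide)
  then show ?thesis using a b unfolding a_def b_def by (simp add: divide_le_eq mult.assoc)
qed

lemma sq_bound:
  fixes S a b :: real
  assumes "0 \<le> S" "S \<le> a * sqrt S * b" "0 \<le> a" "0 \<le> b"
  shows "S \<le> a\<^sup>2 * b\<^sup>2"
proof (cases "S = 0")
  case True then show ?thesis by simp
next
  case False
  then have pos: "sqrt S > 0" using assms by simp
  have "sqrt S * sqrt S \<le> (a * b) * sqrt S" using assms(1,2) by (simp add: ac_simps)
  from mult_right_le_imp_le[OF this pos] have "sqrt S \<le> a * b" .
  then have "(sqrt S)\<^sup>2 \<le> (a * b)\<^sup>2" using pos by (intro power_mono) auto
  then show ?thesis using assms(1) by (simp add: power_mult_distrib)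
qed

lemma FB:
  assumes T: "bounded_mat T" and Y: "finite Y" and Z: "finite Z"
  shows "(\<Sum>y\<in>Y. (cmod (\<Sum>z\<in>Z. T y z * c z))\<^sup>2) \<le> (op_norm T)\<^sup>2 * (\<Sum>z\<in>Z. (cmod (c z))\<^sup>2)"
proof -
  define d where "d y = (\<Sum>z\<in>Z. T y z * c z)" for y
  define S where "S = (\<Sum>y\<in>Y. (cmod (d y))\<^sup>2)"
  have S0: "S \<ge> 0" unfolding S_def by (simp add: sum_nonneg)
  have "bl T Y Z d c = (\<Sum>y\<in>Y. cnj (d y) * d y)"
    unfolding bl_def d_def by (simp add: sum_distrib_left mult.assoc)
  also have "\<dots> = (\<Sum>y\<in>Y. complex_of_real ((cmod (d y))\<^sup>2))"
    by (intro sum.cong refl) (metis complex_norm_square mult.commute)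
  also have "\<dots> = complex_of_real S"
    unfolding S_def by (simp only: of_real_sum)
  finally have e: "bl T Y Z d c = complex_of_real S" .
  have nS: "nrm Y d = sqrt S" unfolding nrm_def S_def ..
  have "cmod (complex_of_real S) \<le> op_norm T * nrm Y d * nrm Z c"
    using BL[OF T Y Z, of d c] unfolding e .
  then have "S \<le> op_norm T * sqrt S * nrm Z c" using S0 unfolding nS by simp
  then have "S \<le> (op_norm T)\<^sup>2 * (nrm Z c)\<^sup>2"
    using sq_bound S0 op_norm_nonneg[OF T] nrm_nonneg by blast
  then show ?thesis unfolding S_def d_def nrm_sq .
qed

lemma FBt:
  assumes T: "bounded_mat T" and U: "finite U" and Y: "finite Y"
  shows "(\<Sum>y\<in>Y. (cmod (\<Sum>x\<in>U. cnj (u x) * T x y))\<^sup>2) \<le> (op_norm T)\<^sup>2 * (\<Sum>x\<in>U. (cmod (u x))\<^sup>2)"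
proof -
  define a where "a y = (\<Sum>x\<in>U. cnj (u x) * T x y)" for y
  define S where "S = (\<Sum>y\<in>Y. (cmod (a y))\<^sup>2)"
  have S0: "S \<ge> 0" unfolding S_def by (simp add: sum_nonneg)
  have "bl T U Y u (\<lambda>y. cnj (a y)) = (\<Sum>y\<in>Y. a y * cnj (a y))"
    unfolding bl_def a_def by (subst sum.swap) (simp add: sum_distrib_right)
  also have "\<dots> = (\<Sum>y\<in>Y. complex_of_real ((cmod (a y))\<^sup>2))"
    by (intro sum.cong refl) (metis complex_norm_square mult.commute)
  also have "\<dots> = complex_of_real S"
    unfolding S_def by (simp only: of_real_sum)
  finally have e: "bl T U Y u (\<lambda>y. cnj (a y)) = complex_of_real S" .
  have nS: "nrm Y (\<lambda>y. cnj (a y)) = sqrt S" unfolding nrm_def S_def by simp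
  have "cmod (complex_of_real S) \<le> op_norm T * nrm U u * nrm Y (\<lambda>y. cnj (a y))"
    using BL[OF T U Y, of u "\<lambda>y. cnj (a y)"] unfolding e .
  then have "S \<le> op_norm T * nrm U u * sqrt S" using S0 unfolding nS by simp
  then have "S \<le> op_norm T * sqrt S * nrm U u" by (simp add: ac_simps)
  then have "S \<le> (op_norm T)\<^sup>2 * (nrm U u)\<^sup>2"
    using sq_bound S0 op_norm_nonneg[OF T] nrm_nonneg by blast
  then show ?thesis unfolding S_def a_def nrm_sq .
qed

lemma row_bound:
  assumes T: "bounded_mat T" and Z: "finite Z"
  shows "(\<Sum>z\<in>Z. (cmod (T x z))\<^sup>2) \<le> (op_norm T)\<^sup>2"
  using FBt[OF T _ Z, of "{x}" "\<lambda>_. 1"] by simp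

lemma col_bound:
  assumes T: "bounded_mat T" and Y: "finite Y"
  shows "(\<Sum>y\<in>Y. (cmod (T y z))\<^sup>2) \<le> (op_norm T)\<^sup>2"
  using FB[OF T Y _, of "{z}" "\<lambda>_. 1"] by simp

lemma CS_fin:
  "(\<Sum>y\<in>Y. cmod (a y) * cmod (b y)) \<le> sqrt (\<Sum>y\<in>Y. (cmod (a y))\<^sup>2) * sqrt (\<Sum>y\<in>Y. (cmod (b y))\<^sup>2)"
proof -
  have "(\<Sum>y\<in>Y. cmod (a y) * cmod (b y))\<^sup>2 \<le> (\<Sum>y\<in>Y. (cmod (a y))\<^sup>2) * (\<Sum>y\<in>Y. (cmod (b y))\<^sup>2)"
    by (rule Cauchy_Schwarz_ineq_sum)
  then have "sqrt ((\<Sum>y\<in>Y. cmod (a y) * cmod (b y))\<^sup>2) \<le> sqrt ((\<Sum>y\<in>Y. (cmod (a y))\<^sup>2) * (\<Sum>y\<in>Y. (cmod (b y))\<^sup>2))"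
    by (rule real_sqrt_le_mono)
  moreover have "(\<Sum>y\<in>Y. cmod (a y) * cmod (b y)) \<ge> 0" by (simp add: sum_nonneg)
  ultimately show ?thesis by (simp add: real_sqrt_mult)
qed

lemma l2prod:
  fixes a b :: "'x \<Rightarrow> complex"
  assumes A: "\<And>Y. finite Y \<Longrightarrow> (\<Sum>y\<in>Y. (cmod (a y))\<^sup>2) \<le> Ma"
    and B: "\<And>Y. finite Y \<Longrightarrow> (\<Sum>y\<in>Y. (cmod (b y))\<^sup>2) \<le> Mb"
  shows "(\<lambda>y. a y * b y) summable_on UNIV" "cmod (\<Sum>\<^sub>\<infinity>y. a y * b y) \<le> sqrt Ma * sqrt Mb"
proof -
  have pb: "(\<Sum>y\<in>Y. norm (a y * b y)) \<le> sqrt Ma * sqrt Mb" if Y: "finite Y" for Y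
  proof -
    have "(\<Sum>y\<in>Y. norm (a y * b y)) = (\<Sum>y\<in>Y. cmod (a y) * cmod (b y))" by (simp add: norm_mult)
    also have "\<dots> \<le> sqrt (\<Sum>y\<in>Y. (cmod (a y))\<^sup>2) * sqrt (\<Sum>y\<in>Y. (cmod (b y))\<^sup>2)" by (rule CS_fin)
    also have "\<dots> \<le> sqrt Ma * sqrt Mb"
      using A[OF Y] B[OF Y] A[of "{}"] by (intro mult_mono real_sqrt_le_mono) (auto simp: sum_nonneg)
    finally show ?thesis .
  qed
  have abs: "(\<lambda>y. norm (a y * b y)) summable_on UNIV"
    by (rule nonneg_bdd_above_summable_on) (auto intro!: bdd_aboveI[where M="sqrt Ma * sqrt Mb"] pb)
  then show s: "(\<lambda>y. a y * b y) summable_on UNIV" by (rule abs_summable_summable)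
  have "cmod (\<Sum>\<^sub>\<infinity>y. a y * b y) \<le> (\<Sum>\<^sub>\<infinity>y. norm (a y * b y))"
    by (rule norm_infsum_bound) (use abs in simp)
  also have "\<dots> \<le> sqrt Ma * sqrt Mb"
    by (rule infsum_le_finite_sums[OF abs]) (rule pb)
  finally show "cmod (\<Sum>\<^sub>\<infinity>y. a y * b y) \<le> sqrt Ma * sqrt Mb" .
qed

lemma infsum_finsum:
  fixes f :: "'z \<Rightarrow> 'y \<Rightarrow> 'b::{topological_comm_monoid_add, t2_space}"
  assumes "finite Z" "\<And>z. z \<in> Z \<Longrightarrow> f z summable_on A"
  shows "(\<lambda>y. \<Sum>z\<in>Z. f z y) summable_on A \<and> (\<Sum>\<^sub>\<infinity>y\<in>A. \<Sum>z\<in>Z. f z y) = (\<Sum>z\<in>Z. \<Sum>\<^sub>\<infinity>y\<in>A. f z y)"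
  using assms
proof (induction Z rule: finite_induct)
  case empty then show ?case by simp
next
  case (insert z Z)
  have fz: "f z summable_on A" using insert by simp
  have IH: "(\<lambda>y. \<Sum>z\<in>Z. f z y) summable_on A" "(\<Sum>\<^sub>\<infinity>y\<in>A. \<Sum>z\<in>Z. f z y) = (\<Sum>z\<in>Z. \<Sum>\<^sub>\<infinity>y\<in>A. f z y)"
    using insert by auto
  have "(\<lambda>y. f z y + (\<Sum>z\<in>Z. f z y)) summable_on A" using summable_on_add[OF fz IH(1)] .
  moreover have "(\<Sum>\<^sub>\<infinity>y\<in>A. f z y + (\<Sum>z\<in>Z. f z y)) = (\<Sum>\<^sub>\<infinity>y\<in>A. f z y) + (\<Sum>z\<in>Z. \<Sum>\<^sub>\<infinity>y\<in>A. f z y)"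
    using infsum_add[OF fz IH(1)] IH(2) by simp
  ultimately show ?case using insert(1,2) by simp
qed

lemma col_l2: "bounded_mat T \<Longrightarrow> finite Y \<Longrightarrow> (\<Sum>y\<in>Y. (cmod (T y z))\<^sup>2) \<le> (op_norm T)\<^sup>2"
  by (rule col_bound)

lemma LA:
  assumes T: "bounded_mat T" and V: "\<And>Y. finite Y \<Longrightarrow> (\<Sum>y\<in>Y. (cmod (v y))\<^sup>2) \<le> M"
    and Z: "finite Z"
  shows "(\<Sum>z\<in>Z. (cmod (\<Sum>\<^sub>\<infinity>y. v y * T y z))\<^sup>2) \<le> (op_norm T)\<^sup>2 * M"
proof -
  have M0: "M \<ge> 0" using V[of "{}"] by simp
  have summ: "(\<lambda>y. v y * T y z) summable_on UNIV" for z
    using l2prod(1)[OF V col_bound[OF T]] .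
  define w where "w z = (\<Sum>\<^sub>\<infinity>y. v y * T y z)" for z
  define S where "S = (\<Sum>z\<in>Z. (cmod (w z))\<^sup>2)"
  have S0: "S \<ge> 0" unfolding S_def by (simp add: sum_nonneg)
  define b where "b y = (\<Sum>z\<in>Z. T y z * cnj (w z))" for y
  have "complex_of_real S = (\<Sum>z\<in>Z. w z * cnj (w z))"
    unfolding S_def of_real_sum by (intro sum.cong refl) (metis complex_norm_square)
  also have "\<dots> = (\<Sum>z\<in>Z. \<Sum>\<^sub>\<infinity>y. v y * T y z * cnj (w z))"
    unfolding w_def by (intro sum.cong refl) (rule infsum_cmult_left'[symmetric])
  also have "\<dots> = (\<Sum>\<^sub>\<infinity>y. \<Sum>z\<in>Z. v y * T y z * cnj (w z))"
    using infsum_finsum[OF Z, of "\<lambda>z y. v y * T y z * cnj (w z)" UNIV] summ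
    by (simp add: summable_on_cmult_left)
  also have "\<dots> = (\<Sum>\<^sub>\<infinity>y. v y * b y)"
    unfolding b_def by (simp add: sum_distrib_left mult.assoc)
  finally have e: "complex_of_real S = (\<Sum>\<^sub>\<infinity>y. v y * b y)" .
  have Bb: "(\<Sum>y\<in>Y. (cmod (b y))\<^sup>2) \<le> (op_norm T)\<^sup>2 * S" if "finite Y" for Y
    using FB[OF T that Z, of "\<lambda>z. cnj (w z)"] unfolding b_def S_def by simp
  have "cmod (\<Sum>\<^sub>\<infinity>y. v y * b y) \<le> sqrt M * sqrt ((op_norm T)\<^sup>2 * S)"
    using l2prod(2)[OF V Bb] .
  then have "S \<le> sqrt M * sqrt ((op_norm T)\<^sup>2 * S)" using e[symmetric] S0 by simp
  also have "\<dots> = op_norm T * sqrt S * sqrt M"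
    using op_norm_nonneg[OF T] by (simp add: real_sqrt_mult)
  finally have "S \<le> op_norm T * sqrt S * sqrt M" .
  from sq_bound[OF S0 this op_norm_nonneg[OF T]] have "S \<le> (op_norm T)\<^sup>2 * (sqrt M)\<^sup>2"
    using M0 by simp
  then show ?thesis using M0 unfolding S_def w_def by simp
qed

lemma bounded_intro:
  assumes C: "C \<ge> 0"
    and H: "\<And>U V u v. finite U \<Longrightarrow> finite V \<Longrightarrow> cmod (bl T U V u v) \<le> C * nrm U u * nrm V v"
  shows "bounded_mat T" "op_norm T \<le> C"
proof -
  have le: "c \<le> C" if cv: "c \<in> op_vals T" for c
  proof -
    obtain u v where uv: "c = cmod (bl T (supp u) (supp v) u v)" "finite (supp u)" "finite (supp v)"
      "vnorm2 u \<le> 1" "vnorm2 v \<le> 1"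
      using cv unfolding op_vals_def bl_def by blast
    have nu: "nrm (supp u) u \<le> 1" using uv(4) unfolding nrm_def vnorm2_def by simp
    have nv: "nrm (supp v) v \<le> 1" using uv(5) unfolding nrm_def vnorm2_def by simp
    have "c \<le> C * nrm (supp u) u * nrm (supp v) v" using H[OF uv(2,3)] uv(1) by simp
    also have "\<dots> \<le> C * 1 * 1" using C nu nv nrm_nonneg
      by (intro mult_mono) (auto simp: mult_nonneg_nonneg)
    finally show ?thesis by simp
  qed
  show "bounded_mat T" unfolding bounded_mat_def using le by (intro bdd_aboveI) blast
  show "op_norm T \<le> C" unfolding op_norm_def using le op_vals_0 by (intro cSup_least) auto
qed

lemma BLb:
  assumes "bounded_mat T" "finite U" "finite V" "op_norm T \<le> C"
  shows "cmod (bl T U V u v) \<le> C * nrm U u * nrm V v"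
proof -
  have "cmod (bl T U V u v) \<le> op_norm T * nrm U u * nrm V v" using BL assms by blast
  also have "\<dots> \<le> C * nrm U u * nrm V v" using assms(4) nrm_nonneg
    by (intro mult_right_mono) (auto simp: mult_nonneg_nonneg)
  finally show ?thesis .
qed

lemma bl_add: "bl (mat_add A B) U V u v = bl A U V u v + bl B U V u v"
  unfolding bl_def mat_add_def by (simp add: sum.distrib[symmetric] algebra_simps)

lemma bl_diff: "bl (mat_diff A B) U V u v = bl A U V u v - bl B U V u v"
  unfolding bl_def mat_diff_def by (simp add: sum_subtractf[symmetric] algebra_simps)

lemma bl_scale: "bl (mat_scale c A) U V u v = c * bl A U V u v"
  unfolding bl_def mat_scale_def by (simp add: sum_distrib_left algebra_simps)

lemma bl_adj: "bl (mat_adj A) U V u v = cnj (bl A V U v u)"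
  unfolding bl_def mat_adj_def by (subst sum.swap) (simp add: mult.commute mult.left_commute)

lemma bounded_add:
  assumes "bounded_mat A" "bounded_mat B"
  shows "bounded_mat (mat_add A B)" "op_norm (mat_add A B) \<le> op_norm A + op_norm B"
proof -
  have H: "cmod (bl (mat_add A B) U V u v) \<le> (op_norm A + op_norm B) * nrm U u * nrm V v"
    if "finite U" "finite V" for U V u v
  proof -
    have "cmod (bl (mat_add A B) U V u v) \<le> cmod (bl A U V u v) + cmod (bl B U V u v)"
      unfolding bl_add by (rule norm_triangle_ineq)
    also have "\<dots> \<le> op_norm A * nrm U u * nrm V v + op_norm B * nrm U u * nrm V v"
      using BL[OF assms(1) that] BL[OF assms(2) that] by (intro add_mono) auto
    finally show ?thesis by (simp add: algebra_simps)
  qed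
  have C: "op_norm A + op_norm B \<ge> 0" using op_norm_nonneg[OF assms(1)] op_norm_nonneg[OF assms(2)] by simp
  show "bounded_mat (mat_add A B)" "op_norm (mat_add A B) \<le> op_norm A + op_norm B"
    using bounded_intro[OF C H] by auto
qed

lemma bounded_diff:
  assumes "bounded_mat A" "bounded_mat B"
  shows "bounded_mat (mat_diff A B)"
proof -
  have H: "cmod (bl (mat_diff A B) U V u v) \<le> (op_norm A + op_norm B) * nrm U u * nrm V v"
    if "finite U" "finite V" for U V u v
  proof -
    have "cmod (bl (mat_diff A B) U V u v) \<le> cmod (bl A U V u v) + cmod (bl B U V u v)"
      unfolding bl_diff by (rule norm_triangle_ineq4)
    also have "\<dots> \<le> op_norm A * nrm U u * nrm V v + op_norm B * nrm U u * nrm V v"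
      using BL[OF assms(1) that] BL[OF assms(2) that] by (intro add_mono) auto
    finally show ?thesis by (simp add: algebra_simps)
  qed
  have C: "op_norm A + op_norm B \<ge> 0" using op_norm_nonneg[OF assms(1)] op_norm_nonneg[OF assms(2)] by simp
  show "bounded_mat (mat_diff A B)"
    using bounded_intro[OF C H] by auto
qed

lemma bounded_scale:
  assumes "bounded_mat A"
  shows "bounded_mat (mat_scale c A)"
proof -
  have H: "cmod (bl (mat_scale c A) U V u v) \<le> (cmod c * op_norm A) * nrm U u * nrm V v"
    if "finite U" "finite V" for U V u v
    using BL[OF assms that, of u v] unfolding bl_scale norm_mult
    by (simp add: mult.assoc mult_left_mono)
  have C: "cmod c * op_norm A \<ge> 0" using op_norm_nonneg[OF assms] by simp
  show ?thesis using bounded_intro[OF C H] by auto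
qed

lemma bounded_adj:
  assumes "bounded_mat A"
  shows "bounded_mat (mat_adj A)" "op_norm (mat_adj A) \<le> op_norm A"
proof -
  have H: "cmod (bl (mat_adj A) U V u v) \<le> op_norm A * nrm U u * nrm V v"
    if "finite U" "finite V" for U V u v
    using BL[OF assms that(2,1), of v u] unfolding bl_adj complex_mod_cnj
    by (simp add: ac_simps)
  show "bounded_mat (mat_adj A)" "op_norm (mat_adj A) \<le> op_norm A"
    using bounded_intro[OF op_norm_nonneg[OF assms] H] by auto
qed

lemma mat_adj_adj: "mat_adj (mat_adj A) = A"
  unfolding mat_adj_def by simp

lemma op_norm_adj: "bounded_mat A \<Longrightarrow> op_norm (mat_adj A) = op_norm A"
  using bounded_adj[of A] bounded_adj[of "mat_adj A"] mat_adj_adj[of A] by force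

lemma mult_summable:
  assumes "bounded_mat A" "bounded_mat B"
  shows "(\<lambda>y. A x y * B y z) summable_on UNIV"
  using l2prod(1)[OF row_bound[OF assms(1)] col_bound[OF assms(2)]] .

lemma bounded_mult:
  assumes A: "bounded_mat A" and B: "bounded_mat B"
  shows "bounded_mat (mat_mult A B)" "op_norm (mat_mult A B) \<le> op_norm A * op_norm B"
proof -
  have H: "cmod (bl (mat_mult A B) U V u v) \<le> (op_norm A * op_norm B) * nrm U u * nrm V v"
    if U: "finite U" and V: "finite V" for U V u v
  proof -
    define a where "a y = (\<Sum>x\<in>U. cnj (u x) * A x y)" for y
    define b where "b y = (\<Sum>z\<in>V. B y z * v z)" for y
    have "bl (mat_mult A B) U V u v = (\<Sum>x\<in>U. \<Sum>z\<in>V. \<Sum>\<^sub>\<infinity>y. cnj (u x) * (A x y * B y z) * v z)"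
      unfolding bl_def mat_mult_def
      by (intro sum.cong refl) (simp add: infsum_cmult_left' infsum_cmult_right')
    also have "\<dots> = (\<Sum>x\<in>U. \<Sum>\<^sub>\<infinity>y. \<Sum>z\<in>V. cnj (u x) * (A x y * B y z) * v z)"
      using infsum_finsum[OF V, of "\<lambda>z y. cnj (u _) * (A _ y * B y z) * v z" UNIV]
      by (intro sum.cong refl)
        (simp add: infsum_finsum[OF V] summable_on_cmult_left summable_on_cmult_right mult_summable[OF A B])
    also have "\<dots> = (\<Sum>\<^sub>\<infinity>y. \<Sum>x\<in>U. \<Sum>z\<in>V. cnj (u x) * (A x y * B y z) * v z)"
    proof -
      have "(\<lambda>y. \<Sum>z\<in>V. cnj (u x) * (A x y * B y z) * v z) summable_on UNIV" for x
        using infsum_finsum[OF V, of "\<lambda>z y. cnj (u x) * (A x y * B y z) * v z" UNIV]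
        by (simp add: summable_on_cmult_left summable_on_cmult_right mult_summable[OF A B])
      then show ?thesis using infsum_finsum[OF U, of "\<lambda>x y. \<Sum>z\<in>V. cnj (u x) * (A x y * B y z) * v z" UNIV]
        by simp
    qed
    also have "\<dots> = (\<Sum>\<^sub>\<infinity>y. a y * b y)"
      unfolding a_def b_def by (intro infsum_cong) (simp add: sum_product algebra_simps sum.swap[of _ V U])
    finally have e: "bl (mat_mult A B) U V u v = (\<Sum>\<^sub>\<infinity>y. a y * b y)" .
    have Ba: "(\<Sum>y\<in>Y. (cmod (a y))\<^sup>2) \<le> (op_norm A)\<^sup>2 * (nrm U u)\<^sup>2" if "finite Y" for Y
      using FBt[OF A U that, of u] unfolding a_def nrm_sq .
    have Bb: "(\<Sum>y\<in>Y. (cmod (b y))\<^sup>2) \<le> (op_norm B)\<^sup>2 * (nrm V v)\<^sup>2" if "finite Y" for Y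
      using FB[OF B that V, of v] unfolding b_def nrm_sq .
    have "cmod (\<Sum>\<^sub>\<infinity>y. a y * b y) \<le> sqrt ((op_norm A)\<^sup>2 * (nrm U u)\<^sup>2) * sqrt ((op_norm B)\<^sup>2 * (nrm V v)\<^sup>2)"
      using l2prod(2)[OF Ba Bb] .
    also have "\<dots> = (op_norm A * op_norm B) * nrm U u * nrm V v"
      using op_norm_nonneg[OF A] op_norm_nonneg[OF B] nrm_nonneg[of U u] nrm_nonneg[of V v]
      by (simp add: real_sqrt_mult)
    finally show ?thesis unfolding e .
  qed
  have C: "op_norm A * op_norm B \<ge> 0" using op_norm_nonneg[OF A] op_norm_nonneg[OF B] by simp
  show "bounded_mat (mat_mult A B)" "op_norm (mat_mult A B) \<le> op_norm A * op_norm B"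
    using bounded_intro[OF C H] by auto
qed

lemma bounded_mult_op:
  assumes f: "\<And>x. cmod (f x) \<le> C"
  shows "bounded_mat (mult_op f)"
proof -
  have C: "C \<ge> 0" using f[of undefined] norm_ge_zero order_trans by blast
  have H: "cmod (bl (mult_op f) U V u v) \<le> C * nrm U u * nrm V v"
    if U: "finite U" and V: "finite V" for U V u v
  proof -
    have inner: "(\<Sum>y\<in>V. cnj (u x) * mult_op f x y * v y) = (if x \<in> V then cnj (u x) * f x * v x else 0)" for x
    proof -
      have "(\<Sum>y\<in>V. cnj (u x) * mult_op f x y * v y) = (\<Sum>y\<in>V. if y = x then cnj (u x) * f x * v x else 0)"
        by (rule sum.cong) (auto simp: mult_op_def)
      then show ?thesis using V by simp
    qed
    have "bl (mult_op f) U V u v = (\<Sum>x\<in>U. if x \<in> V then cnj (u x) * f x * v x else 0)"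
      unfolding bl_def inner ..
    also have "\<dots> = (\<Sum>x\<in>U \<inter> V. cnj (u x) * f x * v x)"
      by (rule sum.inter_restrict[OF U, symmetric])
    also have "cmod \<dots> \<le> (\<Sum>x\<in>U \<inter> V. C * (cmod (u x) * cmod (v x)))"
    proof (rule order_trans[OF norm_sum], rule sum_mono)
      fix x
      have "cmod (f x) * (cmod (u x) * cmod (v x)) \<le> C * (cmod (u x) * cmod (v x))"
        using f[of x] by (intro mult_right_mono) auto
      then show "cmod (cnj (u x) * f x * v x) \<le> C * (cmod (u x) * cmod (v x))"
        by (simp add: norm_mult ac_simps)
    qed
    also have "\<dots> = C * (\<Sum>x\<in>U \<inter> V. cmod (u x) * cmod (v x))" by (simp add: sum_distrib_left)
    also have "\<dots> \<le> C * (nrm (U \<inter> V) u * nrm (U \<inter> V) v)"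
      unfolding nrm_def using C by (intro mult_left_mono CS_fin) auto
    also have "\<dots> \<le> C * (nrm U u * nrm V v)"
      unfolding nrm_def using C U V
      by (intro mult_left_mono mult_mono real_sqrt_le_mono sum_mono2) (auto simp: sum_nonneg)
    finally show ?thesis by (simp add: mult.assoc)
  qed
  show ?thesis using bounded_intro[OF C H] by auto
qed

lemma bounded_pmap:
  assumes g: "inj_on g (dom g)"
  shows "bounded_mat (\<lambda>y x. if g x = Some y then 1 else 0)"
proof -
  define M where "M = (\<lambda>y x. if g x = Some y then (1::complex) else 0)"
  have H: "cmod (bl M U V u v) \<le> 1 * nrm U u * nrm V v"
    if U: "finite U" and V: "finite V" for U V u v
  proof -
    define V' where "V' = {x\<in>V. \<exists>y\<in>U. g x = Some y}"
    define h where "h x = the (g x)" for x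
    have V'V: "V' \<subseteq> V" unfolding V'_def by auto
    have fV': "finite V'" using V'V V by (rule finite_subset)
    have "bl M U V u v = (\<Sum>x\<in>V. \<Sum>y\<in>U. cnj (u y) * M y x * v x)"
      unfolding bl_def by (rule sum.swap)
    also have "\<dots> = (\<Sum>x\<in>V. if x \<in> V' then cnj (u (h x)) * v x else 0)"
    proof (intro sum.cong refl)
      fix x assume x: "x \<in> V"
      show "(\<Sum>y\<in>U. cnj (u y) * M y x * v x) = (if x \<in> V' then cnj (u (h x)) * v x else 0)"
      proof (cases "x \<in> V'")
        case True
        then obtain y where y: "y \<in> U" "g x = Some y" unfolding V'_def by auto
        have "(\<Sum>y\<in>U. cnj (u y) * M y x * v x) = (\<Sum>y'\<in>U. if y' = y then cnj (u y) * v x else 0)"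
          by (intro sum.cong refl) (auto simp: M_def y(2))
        also have "\<dots> = cnj (u y) * v x" using y(1) U by simp
        finally show ?thesis using True y(2) unfolding h_def by simp
      next
        case False
        then have "\<forall>y\<in>U. g x \<noteq> Some y" using x unfolding V'_def by auto
        then show ?thesis using False unfolding M_def by (auto intro!: sum.neutral)
      qed
    qed
    also have "\<dots> = (\<Sum>x\<in>V'. cnj (u (h x)) * v x)"
      by (simp add: sum.inter_restrict[OF V, symmetric] Int_absorb1[OF V'V])
    finally have e: "bl M U V u v = (\<Sum>x\<in>V'. cnj (u (h x)) * v x)" .
    have injh: "inj_on h V'"
    proof (rule inj_onI)
      fix x x' assume xx: "x \<in> V'" "x' \<in> V'" "h x = h x'"
      then obtain y y' where "g x = Some y" "g x' = Some y'" unfolding V'_def by auto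
      then have "g x = g x'" "x \<in> dom g" "x' \<in> dom g" using xx(3) unfolding h_def by auto
      then show "x = x'" using inj_onD[OF g] by blast
    qed
    have hV: "h ` V' \<subseteq> U" unfolding V'_def h_def by auto
    have a1: "cmod (bl M U V u v) \<le> (\<Sum>x\<in>V'. cmod (u (h x)) * cmod (v x))"
      unfolding e by (rule order_trans[OF norm_sum]) (simp add: norm_mult)
    have a2: "(\<Sum>x\<in>V'. cmod (u (h x)) * cmod (v x)) \<le> sqrt (\<Sum>x\<in>V'. (cmod (u (h x)))\<^sup>2) * sqrt (\<Sum>x\<in>V'. (cmod (v x))\<^sup>2)"
      by (rule CS_fin)
    have "(\<Sum>x\<in>V'. (cmod (u (h x)))\<^sup>2) = (\<Sum>y\<in>h ` V'. (cmod (u y))\<^sup>2)"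
      using sum.reindex[OF injh, of "\<lambda>y. (cmod (u y))\<^sup>2"] by simp
    also have "\<dots> \<le> (\<Sum>y\<in>U. (cmod (u y))\<^sup>2)" using hV U by (intro sum_mono2) auto
    finally have a3: "(\<Sum>x\<in>V'. (cmod (u (h x)))\<^sup>2) \<le> (\<Sum>y\<in>U. (cmod (u y))\<^sup>2)" .
    have a4: "(\<Sum>x\<in>V'. (cmod (v x))\<^sup>2) \<le> (\<Sum>x\<in>V. (cmod (v x))\<^sup>2)" using V'V V by (intro sum_mono2) auto
    have a5: "sqrt (\<Sum>x\<in>V'. (cmod (u (h x)))\<^sup>2) * sqrt (\<Sum>x\<in>V'. (cmod (v x))\<^sup>2) \<le> nrm U u * nrm V v"
      unfolding nrm_def using a3 a4 by (intro mult_mono real_sqrt_le_mono) (auto simp: sum_nonneg)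
    show ?thesis using a1 a2 a5 by simp
  qed
  show ?thesis using bounded_intro[OF _ H] unfolding M_def by auto
qed

definition Cr :: "'x set \<Rightarrow> ('x \<times> 'x) set" where
  "Cr A = {p. (fst p \<in> A) \<noteq> (snd p \<in> A)}"

definition cb :: "'x set \<Rightarrow> 'x mat \<Rightarrow> real \<Rightarrow> bool" where
  "cb A T B \<longleftrightarrow> (\<forall>W. finite W \<longrightarrow> W \<subseteq> Cr A \<longrightarrow> (\<Sum>p\<in>W. (cmod (T (fst p) (snd p)))\<^sup>2) \<le> B)"

lemma cbD: "cb A T B \<Longrightarrow> finite W \<Longrightarrow> W \<subseteq> Cr A \<Longrightarrow> (\<Sum>p\<in>W. (cmod (T (fst p) (snd p)))\<^sup>2) \<le> B"
  unfolding cb_def by blast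

lemma sq_add_le: "(a + b)\<^sup>2 \<le> 2 * a\<^sup>2 + 2 * (b::real)\<^sup>2"
proof -
  have "0 \<le> (a - b)\<^sup>2" by simp
  then show ?thesis by (simp add: power2_eq_square algebra_simps)
qed

lemma cb_comb:
  assumes K: "\<And>x z. cmod (K x z) \<le> cmod (F x z) + cmod (E x z)"
    and F: "cb A F B1" and E: "cb A E B2"
  shows "cb A K (2 * B1 + 2 * B2)"
  unfolding cb_def
proof (intro allI impI)
  fix W assume W: "finite W" "W \<subseteq> Cr A"
  have "(\<Sum>p\<in>W. (cmod (K (fst p) (snd p)))\<^sup>2) \<le> (\<Sum>p\<in>W. 2 * (cmod (F (fst p) (snd p)))\<^sup>2 + 2 * (cmod (E (fst p) (snd p)))\<^sup>2)"
  proof (rule sum_mono)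
    fix p
    have "(cmod (K (fst p) (snd p)))\<^sup>2 \<le> (cmod (F (fst p) (snd p)) + cmod (E (fst p) (snd p)))\<^sup>2"
      using K by (intro power_mono) auto
    also have "\<dots> \<le> 2 * (cmod (F (fst p) (snd p)))\<^sup>2 + 2 * (cmod (E (fst p) (snd p)))\<^sup>2" by (rule sq_add_le)
    finally show "(cmod (K (fst p) (snd p)))\<^sup>2 \<le> 2 * (cmod (F (fst p) (snd p)))\<^sup>2 + 2 * (cmod (E (fst p) (snd p)))\<^sup>2" .
  qed
  also have "\<dots> = 2 * (\<Sum>p\<in>W. (cmod (F (fst p) (snd p)))\<^sup>2) + 2 * (\<Sum>p\<in>W. (cmod (E (fst p) (snd p)))\<^sup>2)"
    by (simp add: sum.distrib sum_distrib_left)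
  also have "\<dots> \<le> 2 * B1 + 2 * B2" using cbD[OF F W] cbD[OF E W] by simp
  finally show "(\<Sum>p\<in>W. (cmod (K (fst p) (snd p)))\<^sup>2) \<le> 2 * B1 + 2 * B2" .
qed

lemma cb_scale:
  assumes "cb A T B"
  shows "cb A (mat_scale c T) ((cmod c)\<^sup>2 * B)"
  unfolding cb_def
proof (intro allI impI)
  fix W assume W: "finite W" "W \<subseteq> Cr A"
  have "(\<Sum>p\<in>W. (cmod (mat_scale c T (fst p) (snd p)))\<^sup>2) = (cmod c)\<^sup>2 * (\<Sum>p\<in>W. (cmod (T (fst p) (snd p)))\<^sup>2)"
    unfolding mat_scale_def by (simp add: norm_mult power_mult_distrib sum_distrib_left)
  also have "\<dots> \<le> (cmod c)\<^sup>2 * B" using cbD[OF assms W] by (intro mult_left_mono) auto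
  finally show "(\<Sum>p\<in>W. (cmod (mat_scale c T (fst p) (snd p)))\<^sup>2) \<le> (cmod c)\<^sup>2 * B" .
qed

lemma cb_adj:
  assumes "cb A T B"
  shows "cb A (mat_adj T) B"
  unfolding cb_def
proof (intro allI impI)
  fix W assume W: "finite W" "W \<subseteq> Cr A"
  have W': "finite (prod.swap ` W)" "prod.swap ` W \<subseteq> Cr A" using W unfolding Cr_def by auto
  have "(\<Sum>p\<in>W. (cmod (mat_adj T (fst p) (snd p)))\<^sup>2) = (\<Sum>p\<in>prod.swap ` W. (cmod (T (fst p) (snd p)))\<^sup>2)"
    unfolding mat_adj_def by (subst sum.reindex) (auto simp: inj_on_def)
  also have "\<dots> \<le> B" using cbD[OF assms W'] .
  finally show "(\<Sum>p\<in>W. (cmod (mat_adj T (fst p) (snd p)))\<^sup>2) \<le> B" .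
qed

lemma sum_Un_le_nonneg:
  fixes f :: "'a \<Rightarrow> real"
  assumes "finite S1" "finite S2" "\<And>x. f x \<ge> 0"
  shows "sum f (S1 \<union> S2) \<le> sum f S1 + sum f S2"
  using sum_Un[OF assms(1,2), of f] sum_nonneg[of "S1 \<inter> S2" f] assms(3) by simp

lemma cb_norm:
  assumes A: "finite A" and E: "bounded_mat E"
  shows "cb A E (2 * card A * (op_norm E)\<^sup>2)"
  unfolding cb_def
proof (intro allI impI)
  fix W assume W: "finite W" "W \<subseteq> Cr A"
  define Z where "Z = snd ` W"
  define X where "X = fst ` W"
  have fZ: "finite Z" "finite X" using W unfolding Z_def X_def by auto
  have sub: "W \<subseteq> (A \<times> Z) \<union> (X \<times> A)" using W(2) unfolding Cr_def Z_def X_def by force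
  let ?f = "\<lambda>p. (cmod (E (fst p) (snd p)))\<^sup>2"
  have "sum ?f W \<le> sum ?f ((A \<times> Z) \<union> (X \<times> A))"
    using sub fZ A by (intro sum_mono2) auto
  also have "\<dots> \<le> sum ?f (A \<times> Z) + sum ?f (X \<times> A)"
    using fZ A by (intro sum_Un_le_nonneg) auto
  also have "sum ?f (A \<times> Z) = (\<Sum>x\<in>A. \<Sum>z\<in>Z. (cmod (E x z))\<^sup>2)"
    by (simp add: sum.cartesian_product case_prod_unfold)
  also have "\<dots> \<le> (\<Sum>x\<in>A. (op_norm E)\<^sup>2)"
    using row_bound[OF E fZ(1)] by (intro sum_mono) auto
  also have "sum ?f (X \<times> A) = (\<Sum>x\<in>X. \<Sum>z\<in>A. (cmod (E x z))\<^sup>2)"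
    by (simp add: sum.cartesian_product case_prod_unfold)
  also have "\<dots> = (\<Sum>z\<in>A. \<Sum>x\<in>X. (cmod (E x z))\<^sup>2)"
    by (rule sum.swap)
  also have "\<dots> \<le> (\<Sum>z\<in>A. (op_norm E)\<^sup>2)"
    using col_bound[OF E fZ(2)] by (intro sum_mono) auto
  finally show "sum ?f W \<le> 2 * card A * (op_norm E)\<^sup>2" by simp
qed

lemma adj_mult: "mat_adj (mat_mult A B) = mat_mult (mat_adj B) (mat_adj A)"
  unfolding mat_adj_def mat_mult_def
  by (intro ext) (simp add: infsum_cnj[symmetric] mult.commute del: infsum_cnj)

lemma half:
  assumes T1: "bounded_mat T1" and T2: "bounded_mat T2" and A: "finite A"
    and c1: "cb A T1 B1" and c2: "cb A T2 B2"
    and W: "finite W" and WA: "\<And>p. p \<in> W \<Longrightarrow> fst p \<in> A \<and> snd p \<notin> A"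
  shows "(\<Sum>p\<in>W. (cmod (mat_mult T1 T2 (fst p) (snd p)))\<^sup>2) \<le> 2 * ((op_norm T2)\<^sup>2 * B1 + (op_norm T1)\<^sup>2 * B2)"
proof -
  define X where "X = fst ` W"
  define Z where "Z = snd ` W"
  have fX: "finite X" and fZ: "finite Z" using W unfolding X_def Z_def by auto
  have XA: "X \<subseteq> A" using WA unfolding X_def by auto
  have ZA: "\<And>z. z \<in> Z \<Longrightarrow> z \<notin> A" using WA unfolding Z_def by auto
  define r where "r x y = (if y \<in> A then 0 else T1 x y)" for x y
  define p where "p x z = (\<Sum>\<^sub>\<infinity>y. r x y * T2 y z)" for x z
  define q where "q x z = (\<Sum>y\<in>A. T1 x y * T2 y z)" for x z
  have rb: "(\<Sum>y\<in>Y. (cmod (r x y))\<^sup>2) \<le> (op_norm T1)\<^sup>2" if Y: "finite Y" for x Y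
  proof -
    have "(\<Sum>y\<in>Y. (cmod (r x y))\<^sup>2) \<le> (\<Sum>y\<in>Y. (cmod (T1 x y))\<^sup>2)"
      unfolding r_def by (intro sum_mono) auto
    also have "\<dots> \<le> (op_norm T1)\<^sup>2" using row_bound[OF T1 Y] .
    finally show ?thesis .
  qed
  have split: "mat_mult T1 T2 x z = p x z + q x z" for x z
  proof -
    define g where "g y = T1 x y * T2 y z" for y
    have e: "(\<lambda>y. T1 x y * T2 y z) = (\<lambda>y. r x y * T2 y z + (if y \<in> A then g y else 0))"
      unfolding r_def g_def by auto
    have s1: "(\<lambda>y. r x y * T2 y z) summable_on UNIV"
      using l2prod(1)[OF rb col_bound[OF T2]] .
    have s2: "(\<lambda>y. if y \<in> A then g y else 0) summable_on UNIV"
      using summable_on_cong_neutral[of A UNIV g "\<lambda>y. if y \<in> A then g y else 0"] A by simp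
    have v2: "(\<Sum>\<^sub>\<infinity>y. if y \<in> A then g y else 0) = (\<Sum>y\<in>A. g y)"
      using infsum_cong_neutral[of A UNIV g "\<lambda>y. if y \<in> A then g y else 0"] A by simp
    have "mat_mult T1 T2 x z = (\<Sum>\<^sub>\<infinity>y. r x y * T2 y z + (if y \<in> A then g y else 0))"
      unfolding mat_mult_def e ..
    also have "\<dots> = p x z + q x z"
      using infsum_add[OF s1 s2] v2 unfolding p_def q_def g_def by simp
    finally show ?thesis .
  qed
  let ?f = "\<lambda>x z. (cmod (mat_mult T1 T2 x z))\<^sup>2"
  have "(\<Sum>p\<in>W. ?f (fst p) (snd p)) \<le> (\<Sum>pp\<in>X \<times> Z. ?f (fst pp) (snd pp))"
    using fX fZ W by (intro sum_mono2) (force simp: X_def Z_def)+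
  also have "\<dots> = (\<Sum>x\<in>X. \<Sum>z\<in>Z. ?f x z)" by (simp add: sum.cartesian_product case_prod_unfold)
  also have "\<dots> \<le> (\<Sum>x\<in>X. \<Sum>z\<in>Z. 2 * (cmod (p x z))\<^sup>2 + 2 * (cmod (q x z))\<^sup>2)"
  proof (intro sum_mono)
    fix x z
    have "?f x z \<le> (cmod (p x z) + cmod (q x z))\<^sup>2"
      unfolding split by (intro power_mono norm_triangle_ineq) auto
    also have "\<dots> \<le> 2 * (cmod (p x z))\<^sup>2 + 2 * (cmod (q x z))\<^sup>2" by (rule sq_add_le)
    finally show "?f x z \<le> 2 * (cmod (p x z))\<^sup>2 + 2 * (cmod (q x z))\<^sup>2" .
  qed
  also have "\<dots> = 2 * (\<Sum>x\<in>X. \<Sum>z\<in>Z. (cmod (p x z))\<^sup>2) + 2 * (\<Sum>x\<in>X. \<Sum>z\<in>Z. (cmod (q x z))\<^sup>2)"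
    by (simp add: sum.distrib sum_distrib_left)
  also have "(\<Sum>x\<in>X. \<Sum>z\<in>Z. (cmod (p x z))\<^sup>2) \<le> (op_norm T2)\<^sup>2 * B1"
  proof -
    define M where "M x = (\<Sum>\<^sub>\<infinity>y. (cmod (r x y))\<^sup>2)" for x
    have sr: "(\<lambda>y. (cmod (r x y))\<^sup>2) summable_on UNIV" for x
      by (rule nonneg_bdd_above_summable_on) (auto intro!: bdd_aboveI[where M="(op_norm T1)\<^sup>2"] rb)
    have rM: "(\<Sum>y\<in>Y. (cmod (r x y))\<^sup>2) \<le> M x" if "finite Y" for x Y
      unfolding M_def using that by (intro finite_sum_le_infsum[OF sr]) auto
    have step1: "(\<Sum>z\<in>Z. (cmod (p x z))\<^sup>2) \<le> (op_norm T2)\<^sup>2 * M x" for x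
      unfolding p_def using LA[OF T2 rM fZ] .
    have sumM: "(\<Sum>x\<in>X. M x) \<le> B1"
    proof -
      have fs: "(\<lambda>y. \<Sum>x\<in>X. (cmod (r x y))\<^sup>2) summable_on UNIV \<and>
          (\<Sum>\<^sub>\<infinity>y. \<Sum>x\<in>X. (cmod (r x y))\<^sup>2) = (\<Sum>x\<in>X. \<Sum>\<^sub>\<infinity>y. (cmod (r x y))\<^sup>2)"
        using infsum_finsum[OF fX, of "\<lambda>x y. (cmod (r x y))\<^sup>2" UNIV] sr by simp
      have "(\<Sum>\<^sub>\<infinity>y. \<Sum>x\<in>X. (cmod (r x y))\<^sup>2) \<le> B1"
      proof (rule infsum_le_finite_sums)
        show "(\<lambda>y. \<Sum>x\<in>X. (cmod (r x y))\<^sup>2) summable_on UNIV" using fs by blast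
        fix Y :: "'a set" assume Y: "finite Y" "Y \<subseteq> UNIV"
        have "(\<Sum>y\<in>Y. \<Sum>x\<in>X. (cmod (r x y))\<^sup>2) = (\<Sum>x\<in>X. \<Sum>y\<in>Y. (cmod (r x y))\<^sup>2)"
          by (rule sum.swap)
        also have "\<dots> = (\<Sum>x\<in>X. \<Sum>y\<in>Y - A. (cmod (T1 x y))\<^sup>2)"
        proof (rule sum.cong[OF refl])
          fix x
          have "(\<Sum>y\<in>Y. (cmod (r x y))\<^sup>2) = (\<Sum>y\<in>Y - A. (cmod (r x y))\<^sup>2)"
            using Y by (intro sum.mono_neutral_right) (auto simp: r_def)
          also have "\<dots> = (\<Sum>y\<in>Y - A. (cmod (T1 x y))\<^sup>2)"
            by (intro sum.cong refl) (auto simp: r_def)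
          finally show "(\<Sum>y\<in>Y. (cmod (r x y))\<^sup>2) = (\<Sum>y\<in>Y - A. (cmod (T1 x y))\<^sup>2)" .
        qed
        also have "\<dots> = (\<Sum>pp\<in>X \<times> (Y - A). (cmod (T1 (fst pp) (snd pp)))\<^sup>2)"
          by (simp add: sum.cartesian_product case_prod_unfold)
        also have "\<dots> \<le> B1"
          using XA Y by (intro cbD[OF c1]) (auto simp: Cr_def fX)
        finally show "(\<Sum>y\<in>Y. \<Sum>x\<in>X. (cmod (r x y))\<^sup>2) \<le> B1" .
      qed
      then show ?thesis using fs unfolding M_def by simp
    qed
    have "(\<Sum>x\<in>X. \<Sum>z\<in>Z. (cmod (p x z))\<^sup>2) \<le> (\<Sum>x\<in>X. (op_norm T2)\<^sup>2 * M x)"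
      by (intro sum_mono step1)
    also have "\<dots> = (op_norm T2)\<^sup>2 * (\<Sum>x\<in>X. M x)" by (simp add: sum_distrib_left)
    also have "\<dots> \<le> (op_norm T2)\<^sup>2 * B1" using sumM by (intro mult_left_mono) auto
    finally show ?thesis .
  qed
  also have "(\<Sum>x\<in>X. \<Sum>z\<in>Z. (cmod (q x z))\<^sup>2) \<le> (op_norm T1)\<^sup>2 * B2"
  proof -
    have "(\<Sum>x\<in>X. \<Sum>z\<in>Z. (cmod (q x z))\<^sup>2) = (\<Sum>z\<in>Z. \<Sum>x\<in>X. (cmod (q x z))\<^sup>2)"
      by (rule sum.swap)
    also have "\<dots> \<le> (\<Sum>z\<in>Z. (op_norm T1)\<^sup>2 * (\<Sum>y\<in>A. (cmod (T2 y z))\<^sup>2))"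
      unfolding q_def by (intro sum_mono FB[OF T1 fX A])
    also have "\<dots> = (op_norm T1)\<^sup>2 * (\<Sum>z\<in>Z. \<Sum>y\<in>A. (cmod (T2 y z))\<^sup>2)"
      by (simp add: sum_distrib_left)
    also have "(\<Sum>z\<in>Z. \<Sum>y\<in>A. (cmod (T2 y z))\<^sup>2) = (\<Sum>pp\<in>A \<times> Z. (cmod (T2 (fst pp) (snd pp)))\<^sup>2)"
      by (subst sum.swap) (simp add: sum.cartesian_product case_prod_unfold)
    also have "\<dots> \<le> B2"
      using ZA by (intro cbD[OF c2]) (auto simp: Cr_def A fZ)
    finally show ?thesis by (simp add: mult_left_mono)
  qed
  finally show ?thesis by simp
qed

lemma cb_mult:
  assumes T1: "bounded_mat T1" and T2: "bounded_mat T2" and A: "finite A"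
    and c1: "cb A T1 B1" and c2: "cb A T2 B2"
  shows "cb A (mat_mult T1 T2) (4 * ((op_norm T2)\<^sup>2 * B1 + (op_norm T1)\<^sup>2 * B2))"
  unfolding cb_def
proof (intro allI impI)
  fix W assume W: "finite W" "W \<subseteq> Cr A"
  define W1 where "W1 = {p\<in>W. fst p \<in> A}"
  define W2 where "W2 = {p\<in>W. fst p \<notin> A}"
  have fW: "finite W1" "finite W2" using W unfolding W1_def W2_def by auto
  have WU: "W = W1 \<union> W2" unfolding W1_def W2_def by auto
  let ?g = "\<lambda>p. (cmod (mat_mult T1 T2 (fst p) (snd p)))\<^sup>2"
  have h1: "sum ?g W1 \<le> 2 * ((op_norm T2)\<^sup>2 * B1 + (op_norm T1)\<^sup>2 * B2)"
    using W(2) by (intro half[OF T1 T2 A c1 c2 fW(1)]) (auto simp: W1_def Cr_def)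
  have "sum ?g W2 = (\<Sum>p\<in>prod.swap ` W2. (cmod (mat_adj (mat_mult T1 T2) (fst p) (snd p)))\<^sup>2)"
    unfolding mat_adj_def by (subst sum.reindex) (auto simp: inj_on_def)
  also have "\<dots> = (\<Sum>p\<in>prod.swap ` W2. (cmod (mat_mult (mat_adj T2) (mat_adj T1) (fst p) (snd p)))\<^sup>2)"
    unfolding adj_mult ..
  also have "\<dots> \<le> 2 * ((op_norm (mat_adj T1))\<^sup>2 * B2 + (op_norm (mat_adj T2))\<^sup>2 * B1)"
    using W(2) fW(2)
    by (intro half[OF bounded_adj(1)[OF T2] bounded_adj(1)[OF T1] A cb_adj[OF c2] cb_adj[OF c1]])
       (auto simp: W2_def Cr_def)
  also have "\<dots> = 2 * ((op_norm T2)\<^sup>2 * B1 + (op_norm T1)\<^sup>2 * B2)"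
    using op_norm_adj[OF T1] op_norm_adj[OF T2] by simp
  finally have h2: "sum ?g W2 \<le> 2 * ((op_norm T2)\<^sup>2 * B1 + (op_norm T1)\<^sup>2 * B2)" .
  have "sum ?g W \<le> sum ?g W1 + sum ?g W2" unfolding WU using fW by (intro sum_Un_le_nonneg) auto
  then show "sum ?g W \<le> 4 * ((op_norm T2)\<^sup>2 * B1 + (op_norm T1)\<^sup>2 * B2)" using h1 h2 by simp
qed

definition good :: "(nat \<Rightarrow> 'x set) \<Rightarrow> 'x mat \<Rightarrow> bool" where
  "good As T \<longleftrightarrow> bounded_mat T \<and> (\<forall>\<epsilon>::real>0. \<exists>N. \<forall>n\<ge>N. cb (As n) T (\<epsilon> * real (card (As n))))"

lemma cb_mono: "cb A T B \<Longrightarrow> B \<le> B' \<Longrightarrow> cb A T B'"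
  unfolding cb_def by (meson order_trans)

lemma goodE: "good As T \<Longrightarrow> (\<epsilon>::real) > 0 \<Longrightarrow> \<exists>N. \<forall>n\<ge>N. cb (As n) T (\<epsilon> * real (card (As n)))"
  unfolding good_def by blast

lemma good_add:
  assumes a: "good As a" and b: "good As b"
  shows "good As (mat_add a b)"
  unfolding good_def
proof (intro conjI allI impI)
  show "bounded_mat (mat_add a b)" using a b unfolding good_def by (simp add: bounded_add)
  fix \<epsilon> :: real assume e: "\<epsilon> > 0"
  obtain N1 where N1: "\<And>n. n \<ge> N1 \<Longrightarrow> cb (As n) a (\<epsilon>/4 * card (As n))" using goodE[OF a, where \<epsilon>="\<epsilon>/4"] e by auto
  obtain N2 where N2: "\<And>n. n \<ge> N2 \<Longrightarrow> cb (As n) b (\<epsilon>/4 * card (As n))" using goodE[OF b, where \<epsilon>="\<epsilon>/4"] e by auto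
  show "\<exists>N. \<forall>n\<ge>N. cb (As n) (mat_add a b) (\<epsilon> * card (As n))"
  proof (intro exI allI impI)
    fix n assume n: "max N1 N2 \<le> n"
    have "cb (As n) (mat_add a b) (2 * (\<epsilon>/4 * card (As n)) + 2 * (\<epsilon>/4 * card (As n)))"
      using n by (intro cb_comb[OF _ N1 N2]) (auto simp: mat_add_def norm_triangle_ineq)
    then show "cb (As n) (mat_add a b) (\<epsilon> * card (As n))" by (rule cb_mono) simp
  qed
qed

lemma good_scale:
  assumes a: "good As a"
  shows "good As (mat_scale c a)"
  unfolding good_def
proof (intro conjI allI impI)
  show "bounded_mat (mat_scale c a)" using a unfolding good_def by (simp add: bounded_scale)
  fix \<epsilon> :: real assume e: "\<epsilon> > 0"
  define k where "k = (cmod c)\<^sup>2"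
  have k: "k \<ge> 0" unfolding k_def by simp
  obtain N where N: "\<And>n. n \<ge> N \<Longrightarrow> cb (As n) a (\<epsilon>/(k+1) * card (As n))"
    using goodE[OF a, where \<epsilon>="\<epsilon>/(k+1)"] e k by auto
  show "\<exists>N. \<forall>n\<ge>N. cb (As n) (mat_scale c a) (\<epsilon> * card (As n))"
  proof (intro exI allI impI)
    fix n assume n: "N \<le> n"
    have kk: "k * (\<epsilon> / (k+1)) \<le> \<epsilon>" using k e by (simp add: field_simps)
    have "cb (As n) (mat_scale c a) (k * (\<epsilon>/(k+1) * card (As n)))"
      using cb_scale[OF N[OF n], of c] unfolding k_def .
    moreover have "k * (\<epsilon>/(k+1) * real (card (As n))) \<le> \<epsilon> * real (card (As n))"
    proof -
      have "k * (\<epsilon>/(k+1) * real (card (As n))) = (k * (\<epsilon>/(k+1))) * real (card (As n))"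
        by (rule mult.assoc[symmetric])
      also have "\<dots> \<le> \<epsilon> * real (card (As n))" using kk by (rule mult_right_mono) simp
      finally show ?thesis .
    qed
    ultimately show "cb (As n) (mat_scale c a) (\<epsilon> * card (As n))"
      by (rule cb_mono)
  qed
qed

lemma good_adj:
  assumes a: "good As a"
  shows "good As (mat_adj a)"
  unfolding good_def
proof (intro conjI allI impI)
  show "bounded_mat (mat_adj a)" using a unfolding good_def by (simp add: bounded_adj)
  fix \<epsilon> :: real assume e: "\<epsilon> > 0"
  obtain N where N: "\<And>n. n \<ge> N \<Longrightarrow> cb (As n) a (\<epsilon> * real (card (As n)))" using goodE[OF a e] by blast
  then show "\<exists>N. \<forall>n\<ge>N. cb (As n) (mat_adj a) (\<epsilon> * real (card (As n)))" using cb_adj by blast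
qed

lemma good_mult:
  assumes a: "good As a" and b: "good As b" and fin: "\<And>n. finite (As n)"
  shows "good As (mat_mult a b)"
  unfolding good_def
proof (intro conjI allI impI)
  have ba: "bounded_mat a" and bb: "bounded_mat b" using a b unfolding good_def by auto
  show "bounded_mat (mat_mult a b)" using ba bb by (simp add: bounded_mult)
  fix \<epsilon> :: real assume e: "\<epsilon> > 0"
  define k where "k = (op_norm a)\<^sup>2 + (op_norm b)\<^sup>2"
  have k: "k \<ge> 0" unfolding k_def by simp
  define e' where "e' = \<epsilon> / (4 * k + 1)"
  have e': "e' > 0" unfolding e'_def using e k by simp
  obtain N1 where N1: "\<And>n. n \<ge> N1 \<Longrightarrow> cb (As n) a (e' * card (As n))" using goodE[OF a e'] by auto
  obtain N2 where N2: "\<And>n. n \<ge> N2 \<Longrightarrow> cb (As n) b (e' * card (As n))" using goodE[OF b e'] by auto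
  show "\<exists>N. \<forall>n\<ge>N. cb (As n) (mat_mult a b) (\<epsilon> * card (As n))"
  proof (intro exI allI impI)
    fix n assume n: "max N1 N2 \<le> n"
    have c: "cb (As n) (mat_mult a b) (4 * ((op_norm b)\<^sup>2 * (e' * card (As n)) + (op_norm a)\<^sup>2 * (e' * card (As n))))"
      using n by (intro cb_mult[OF ba bb fin N1 N2]) auto
    have "4 * ((op_norm b)\<^sup>2 * (e' * card (As n)) + (op_norm a)\<^sup>2 * (e' * card (As n))) = (4 * k * e') * card (As n)"
      unfolding k_def by (simp add: algebra_simps)
    also have "\<dots> \<le> \<epsilon> * card (As n)"
    proof (rule mult_right_mono)
      show "4 * k * e' \<le> \<epsilon>" unfolding e'_def using k e by (simp add: field_simps)
    qed simp
    finally show "cb (As n) (mat_mult a b) (\<epsilon> * card (As n))" using c cb_mono by blast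
  qed
qed

lemma good_lim:
  assumes f: "\<And>n. good As (f n)" and K: "bounded_mat K"
    and lim: "(\<lambda>n. op_norm (mat_diff (f n) K)) \<longlonglongrightarrow> 0" and fin: "\<And>n. finite (As n)"
  shows "good As K"
  unfolding good_def
proof (intro conjI allI impI K)
  fix \<epsilon> :: real assume e: "\<epsilon> > 0"
  have "sqrt (\<epsilon>/8) > 0" using e by simp
  then obtain m where m: "norm (op_norm (mat_diff (f m) K) - 0) < sqrt (\<epsilon>/8)"
    using LIMSEQ_D[OF lim] by blast
  define E where "E = mat_diff (f m) K"
  have bfm: "bounded_mat (f m)" using f unfolding good_def by auto
  have bE: "bounded_mat E" unfolding E_def using bounded_diff[OF bfm K] .
  have nE: "(op_norm E)\<^sup>2 \<le> \<epsilon>/8"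
  proof -
    have "op_norm E < sqrt (\<epsilon>/8)" "op_norm E \<ge> 0" using m op_norm_nonneg[OF bE] unfolding E_def by auto
    then have "(op_norm E)\<^sup>2 \<le> (sqrt (\<epsilon>/8))\<^sup>2" by (intro power_mono) auto
    then show ?thesis using e by simp
  qed
  obtain N where N: "\<And>n. n \<ge> N \<Longrightarrow> cb (As n) (f m) (\<epsilon>/4 * card (As n))" using goodE[OF f, where \<epsilon>="\<epsilon>/4"] e by auto
  show "\<exists>N. \<forall>n\<ge>N. cb (As n) K (\<epsilon> * card (As n))"
  proof (intro exI allI impI)
    fix n assume n: "N \<le> n"
    have Kle: "cmod (K x z) \<le> cmod (f m x z) + cmod (E x z)" for x z
    proof -
      have "K x z = f m x z - E x z" unfolding E_def mat_diff_def by simp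
      then show ?thesis by (simp add: norm_triangle_ineq4)
    qed
    have c: "cb (As n) K (2 * (\<epsilon>/4 * card (As n)) + 2 * (2 * card (As n) * (op_norm E)\<^sup>2))"
      by (rule cb_comb[OF Kle N[OF n] cb_norm[OF fin bE]])
    have "2 * (2 * card (As n) * (op_norm E)\<^sup>2) \<le> 2 * (2 * card (As n) * (\<epsilon>/8))"
      using nE by (intro mult_left_mono) auto
    then have "2 * (\<epsilon>/4 * card (As n)) + 2 * (2 * card (As n) * (op_norm E)\<^sup>2) \<le> \<epsilon> * card (As n)"
      by (simp add: algebra_simps)
    then show "cb (As n) K (\<epsilon> * card (As n))" using c cb_mono by blast
  qed
qed

lemma cb_mult_op: "cb A (mult_op f) 0"
  unfolding cb_def mult_op_def Cr_def by (auto intro!: sum_nonpos)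

lemma infsum_single': "(\<Sum>\<^sub>\<infinity>y. if y = a then g y else 0) = (g a :: complex)"
proof -
  have "(\<Sum>\<^sub>\<infinity>y. if y = a then g y else 0) = infsum g {a}" by (rule infsum_cong_neutral) auto
  then show ?thesis by simp
qed

lemma mm_left: "mat_mult (mult_op d) T x z = d x * T x z"
proof -
  have "(\<lambda>y. mult_op d x y * T y z) = (\<lambda>y. if y = x then d y * T y z else 0)"
    unfolding mult_op_def by auto
  then show ?thesis unfolding mat_mult_def by (simp add: infsum_single')
qed

lemma mm_right: "mat_mult T (mult_op d) x z = T x z * d z"
proof -
  have "(\<lambda>y. T x y * mult_op d y z) = (\<lambda>y. if y = z then T x y * d y else 0)"
    unfolding mult_op_def by auto
  then show ?thesis unfolding mat_mult_def by (simp add: infsum_single')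
qed

lemma infsum_le_fin:
  fixes f :: "'a \<Rightarrow> real"
  assumes "\<And>W. finite W \<Longrightarrow> sum f W \<le> B" "\<And>x. f x \<ge> 0"
  shows "infsum f UNIV \<le> B"
proof (cases "f summable_on UNIV")
  case True then show ?thesis using infsum_le_finite_sums assms(1) by blast
next
  case False then show ?thesis using infsum_not_exists[OF False] assms(1)[of "{}"] by simp
qed

definition ind :: "'x set \<Rightarrow> 'x \<Rightarrow> complex" where
  "ind A x = (if x \<in> A then 1 else 0)"

lemma hs_comm:
  assumes A: "finite A" and c: "cb A T B" and B: "B \<ge> 0"
  shows "hs_norm (mat_diff (mat_mult (mult_op (ind A)) T) (mat_mult T (mult_op (ind A)))) \<le> sqrt B"
proof -
  let ?D = "mat_diff (mat_mult (mult_op (ind A)) T) (mat_mult T (mult_op (ind A)))"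
  have ent: "(cmod (?D x z))\<^sup>2 = (if (x, z) \<in> Cr A then (cmod (T x z))\<^sup>2 else 0)" for x z
    unfolding mat_diff_def mm_left mm_right by (auto simp: ind_def Cr_def)
  have "(\<Sum>\<^sub>\<infinity>p. (cmod (?D (fst p) (snd p)))\<^sup>2) \<le> B"
  proof (rule infsum_le_fin)
    fix W :: "('a \<times> 'a) set" assume W: "finite W"
    have "(\<Sum>p\<in>W. (cmod (?D (fst p) (snd p)))\<^sup>2) = (\<Sum>p\<in>W. if p \<in> Cr A then (cmod (T (fst p) (snd p)))\<^sup>2 else 0)"
      using ent by (intro sum.cong refl) (metis prod.collapse)
    also have "\<dots> = (\<Sum>p\<in>{p\<in>W. p \<in> Cr A}. (cmod (T (fst p) (snd p)))\<^sup>2)"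
      using sum.inter_filter[OF W, of "\<lambda>p. (cmod (T (fst p) (snd p)))\<^sup>2" "\<lambda>p. p \<in> Cr A"] by simp
    also have "\<dots> \<le> B" using W by (intro cbD[OF c]) auto
    finally show "(\<Sum>p\<in>W. (cmod (?D (fst p) (snd p)))\<^sup>2) \<le> B" .
  qed simp
  then show ?thesis unfolding hs_norm_def by simp
qed

lemma hs_P:
  assumes A: "finite A"
  shows "hs_norm (mult_op (ind A)) = sqrt (real (card A))"
proof -
  define D where "D = (\<lambda>x. (x, x)) ` A"
  have "(\<Sum>\<^sub>\<infinity>p. (cmod (mult_op (ind A) (fst p) (snd p)))\<^sup>2) = infsum (\<lambda>p. 1::real) D"
    by (rule infsum_cong_neutral) (auto simp: D_def mult_op_def ind_def image_iff)
  also have "\<dots> = real (card D)" using A unfolding D_def by simp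
  also have "card D = card A" unfolding D_def by (rule card_image) (auto simp: inj_on_def)
  finally show ?thesis unfolding hs_norm_def by simp
qed

lemma cb_V:
  assumes g: "inj_on g (dom g)" and A: "finite A"
  shows "cb A (\<lambda>y x. if g x = Some y then 1 else 0) (real (card (bd g A)))"
  unfolding cb_def
proof (intro allI impI)
  fix W assume W: "finite W" "W \<subseteq> Cr A"
  define W' where "W' = {p\<in>W. g (snd p) = Some (fst p)}"
  have "(\<Sum>p\<in>W. (cmod (if g (snd p) = Some (fst p) then (1::complex) else 0))\<^sup>2) = (\<Sum>p\<in>W. if g (snd p) = Some (fst p) then 1 else 0)"
    by (intro sum.cong refl) auto
  also have "\<dots> = real (card W')" using sum.inter_filter[OF W(1), of "\<lambda>_. 1::real"] unfolding W'_def by simp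
  also have "card W' \<le> card (bd g A)"
  proof (rule card_inj_on_le)
    show "inj_on snd W'" unfolding W'_def inj_on_def by (auto simp: prod_eq_iff)
    show "snd ` W' \<subseteq> bd g A" using W(2) unfolding W'_def bd_def Cr_def by force
    have "bd g A \<subseteq> A \<union> (\<lambda>y. the (invm g y)) ` A"
    proof
      fix x assume "x \<in> bd g A"
      then obtain y where y: "g x = Some y" "(y \<in> A) \<noteq> (x \<in> A)" unfolding bd_def by auto
      show "x \<in> A \<union> (\<lambda>y. the (invm g y)) ` A"
      proof (cases "x \<in> A")
        case False
        then have "y \<in> A" using y by auto
        moreover have "the (invm g y) = x" using invm_Some[OF g y(1)] by simp
        ultimately show ?thesis by blast
      qed simp
    qed
    then show "finite (bd g A)" by (rule finite_subset) (use A in auto)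
  qed
  finally show "(\<Sum>p\<in>W. (cmod (if g (snd p) = Some (fst p) then (1::complex) else 0))\<^sup>2) \<le> real (card (bd g A))"
    by simp
qed

lemma hs_nonneg: "hs_norm K \<ge> 0"
  unfolding hs_norm_def by (simp add: infsum_nonneg)

theorem mainTheorem16:
  fixes \<alpha> :: "'s::monoid_mult \<Rightarrow> ('x \<rightharpoonup> 'x)"
  assumes "inverse_monoid TYPE('s)"
    and "countable (UNIV :: 's set)"
    and "representation \<alpha>"
    and "domain_measurable \<alpha>"
  shows "\<exists>P :: nat \<Rightarrow> 'x mat.
           (\<forall>n. P n \<in> R_X \<alpha> \<and> orth_proj (P n) \<and> finite_rank (P n) \<and> P n \<noteq> mat_zero) \<and>
           (\<forall>T\<in>R_X \<alpha>. (\<lambda>n. hs_norm (mat_diff (mat_mult (P n) T) (mat_mult T (P n)))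
                              / hs_norm (P n)) \<longlonglongrightarrow> 0)"
proof -
  obtain \<mu> :: "'x set \<Rightarrow> ennreal" where
    \<mu>add: "\<And>A B. A \<inter> B = {} \<Longrightarrow> \<mu> (A \<union> B) = \<mu> A + \<mu> B" and \<mu>univ: "\<mu> UNIV = 1"
    and \<mu>inv: "\<And>s B. B \<subseteq> dom (\<alpha> s) \<Longrightarrow> \<mu> B = \<mu> (ran (\<alpha> s |` B))"
    using assms(4) unfolding domain_measurable_def by blast
  have pb: "inj_on (\<alpha> s) (dom (\<alpha> s))" for s
    using assms(3) unfolding representation_def partial_bij_def by blast
  have fol: "\<exists>A. finite A \<and> A \<noteq> {} \<and> (\<forall>s\<in>F. real (card (bd (\<alpha> s) A)) \<le> \<epsilon> * real (card A))"
    if F: "finite F" and e: "\<epsilon> > 0" for F :: "'s set" and \<epsilon> :: real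
  proof -
    interpret fs: folner_setup \<mu> "\<alpha> ` F"
    proof (unfold_locales)
      show "\<And>A B. A \<inter> B = {} \<Longrightarrow> \<mu> (A \<union> B) = \<mu> A + \<mu> B" by (rule \<mu>add)
      show "\<mu> UNIV = 1" by (rule \<mu>univ)
      show "finite (\<alpha> ` F)" using F by simp
      show "\<And>g. g \<in> \<alpha> ` F \<Longrightarrow> inj_on g (dom g)" using pb by blast
      fix g B assume g: "g \<in> \<alpha> ` F" and B: "B \<subseteq> dom g"
      then obtain s where s: "g = \<alpha> s" by blast
      show "\<mu> B = \<mu> (img g B)" using \<mu>inv[of B s] B unfolding s img_ran by simp
    qed
    obtain A where A: "finite A" "A \<noteq> {}" "\<forall>g\<in>\<alpha> ` F. real (card (bd g A)) \<le> \<epsilon> * real (card A)"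
      using fs.folner[OF e] by blast
    then show ?thesis by blast
  qed
  define en where "en = from_nat_into (UNIV :: 's set)"
  have en_surj: "\<exists>k. en k = s" for s using from_nat_into_surj[OF assms(2), of s] unfolding en_def by simp
  have "\<forall>n. \<exists>A. finite A \<and> A \<noteq> {} \<and> (\<forall>s\<in>en ` {..n}. real (card (bd (\<alpha> s) A)) \<le> 1 / real (Suc n) * real (card A))"
  proof
    fix n show "\<exists>A. finite A \<and> A \<noteq> {} \<and> (\<forall>s\<in>en ` {..n}. real (card (bd (\<alpha> s) A)) \<le> 1 / real (Suc n) * real (card A))"
      by (rule fol) auto
  qed
  then have "\<exists>As. \<forall>n. finite (As n) \<and> As n \<noteq> {} \<and> (\<forall>s\<in>en ` {..n}. real (card (bd (\<alpha> s) (As n))) \<le> 1 / real (Suc n) * real (card (As n)))"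
    by (rule choice)
  then obtain As where As: "\<forall>n. finite (As n) \<and> As n \<noteq> {} \<and> (\<forall>s\<in>en ` {..n}. real (card (bd (\<alpha> s) (As n))) \<le> 1 / real (Suc n) * real (card (As n)))"
    by blast
  have finA: "\<And>n. finite (As n)" and neA: "\<And>n. As n \<noteq> {}"
    and folA: "\<And>n s. s \<in> en ` {..n} \<Longrightarrow> real (card (bd (\<alpha> s) (As n))) \<le> 1 / real (Suc n) * real (card (As n))"
    using As by auto
  define Gen where "Gen = range (V_op \<alpha>) \<union> {mult_op f | f. \<exists>C. \<forall>x. cmod (f x) \<le> C}"
  have RX: "R_X \<alpha> = cstar_gen Gen" unfolding R_X_def Gen_def ..
  have GenR: "Gen \<subseteq> R_X \<alpha>" unfolding RX cstar_gen_def by blast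
  have goodV: "good As (V_op \<alpha> s)" for s
  proof -
    have Veq: "V_op \<alpha> s = (\<lambda>y x. if \<alpha> s x = Some y then 1 else 0)" unfolding V_op_def ..
    show ?thesis unfolding good_def
    proof (intro conjI allI impI)
      show "bounded_mat (V_op \<alpha> s)" unfolding Veq by (rule bounded_pmap[OF pb])
      fix \<epsilon> :: real assume e: "\<epsilon> > 0"
      obtain k where k: "en k = s" using en_surj by blast
      obtain M :: nat where M: "M > 0" "inverse (real M) < \<epsilon>" using ex_inverse_of_nat_less[OF e] by blast
      show "\<exists>N. \<forall>n\<ge>N. cb (As n) (V_op \<alpha> s) (\<epsilon> * real (card (As n)))"
      proof (intro exI allI impI)
        fix n assume n: "max k M \<le> n"
        have "s \<in> en ` {..n}" using k n by auto
        then have b: "real (card (bd (\<alpha> s) (As n))) \<le> 1 / real (Suc n) * real (card (As n))" by (rule folA)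
        have "real M \<le> real (Suc n)" using n by simp
        then have "inverse (real (Suc n)) \<le> inverse (real M)" by (rule le_imp_inverse_le) (use M in simp)
        then have "1 / real (Suc n) \<le> \<epsilon>" using M by (simp add: inverse_eq_divide)
        then have "1 / real (Suc n) * real (card (As n)) \<le> \<epsilon> * real (card (As n))" by (rule mult_right_mono) simp
        then have "real (card (bd (\<alpha> s) (As n))) \<le> \<epsilon> * real (card (As n))" using b by linarith
        then have "cb (As n) (\<lambda>y x. if \<alpha> s x = Some y then 1 else 0) (\<epsilon> * real (card (As n)))"
          by (rule cb_mono[OF cb_V[OF pb[of s] finA[of n]]])
        then show "cb (As n) (V_op \<alpha> s) (\<epsilon> * real (card (As n)))" unfolding Veq .
      qed
    qed
  qed
  have goodM: "good As (mult_op f)" if f: "\<forall>x. cmod (f x) \<le> C" for f C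
    unfolding good_def
  proof (intro conjI allI impI)
    show "bounded_mat (mult_op f)" using f by (intro bounded_mult_op) blast
    fix \<epsilon> :: real assume e: "\<epsilon> > 0"
    show "\<exists>N. \<forall>n\<ge>N. cb (As n) (mult_op f) (\<epsilon> * real (card (As n)))"
      using e by (intro exI allI impI cb_mono[OF cb_mult_op]) simp
  qed
  have h1: "Gen \<subseteq> Collect (good As)"
  proof
    fix T assume "T \<in> Gen"
    then consider s where "T = V_op \<alpha> s" | f C where "T = mult_op f" "\<forall>x. cmod (f x) \<le> C"
      unfolding Gen_def by blast
    then show "T \<in> Collect (good As)"
    proof cases
      case 1 then show ?thesis using goodV by simp
    next
      case 2 then show ?thesis using goodM by simp
    qed
  qed
  have h2: "Collect (good As) \<subseteq> Collect bounded_mat" unfolding good_def by auto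
  have h3: "\<forall>a\<in>Collect (good As). \<forall>b\<in>Collect (good As). mat_add a b \<in> Collect (good As) \<and> mat_mult a b \<in> Collect (good As)"
  proof (intro ballI conjI)
    fix a b assume a: "a \<in> Collect (good As)" and b: "b \<in> Collect (good As)"
    show "mat_add a b \<in> Collect (good As)" using good_add a b by simp
    show "mat_mult a b \<in> Collect (good As)" using good_mult[OF _ _ finA] a b by simp
  qed
  have h4: "\<forall>c. \<forall>a\<in>Collect (good As). mat_scale c a \<in> Collect (good As)"
  proof (intro allI ballI)
    fix c a assume "a \<in> Collect (good As)" then show "mat_scale c a \<in> Collect (good As)" using good_scale by simp
  qed
  have h5: "\<forall>a\<in>Collect (good As). mat_adj a \<in> Collect (good As)"
  proof (intro ballI)
    fix a assume "a \<in> Collect (good As)" then show "mat_adj a \<in> Collect (good As)" using good_adj by simp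
  qed
  have h6: "\<forall>f K. (\<forall>n. f n \<in> Collect (good As)) \<and> bounded_mat K \<and>
              (\<lambda>n. op_norm (mat_diff (f n) K)) \<longlonglongrightarrow> 0 \<longrightarrow> K \<in> Collect (good As)"
  proof (intro allI impI)
    fix f K assume H: "(\<forall>n. f n \<in> Collect (good As)) \<and> bounded_mat K \<and> (\<lambda>n. op_norm (mat_diff (f n) K)) \<longlonglongrightarrow> 0"
    then have f: "\<And>n. good As (f n)" and K: "bounded_mat K" and l: "(\<lambda>n. op_norm (mat_diff (f n) K)) \<longlonglongrightarrow> 0" by auto
    show "K \<in> Collect (good As)" using good_lim[OF f K l finA] by simp
  qed
  have RG: "R_X \<alpha> \<subseteq> Collect (good As)"
    unfolding RX cstar_gen_def by (rule Inter_lower) (intro CollectI conjI h1 h2 h3 h4 h5 h6)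
  define P where "P n = mult_op (ind (As n))" for n
  have Pent: "P n x z = (if z = x \<and> x \<in> As n then 1 else 0)" for n x z
    unfolding P_def mult_op_def ind_def by auto
  show ?thesis
  proof (intro exI[of _ P] conjI allI ballI)
    fix n
    have indb: "\<forall>x. cmod (ind (As n) x) \<le> 1" unfolding ind_def by simp
    have "P n \<in> Gen" unfolding Gen_def P_def
      by (rule UnI2, rule CollectI, rule exI[of _ "ind (As n)"], rule conjI[OF refl], rule exI[of _ 1]) (rule indb)
    then show "P n \<in> R_X \<alpha>" using GenR by (rule subsetD[rotated])
    show "orth_proj (P n)" unfolding orth_proj_def
    proof (intro conjI)
      show "bounded_mat (P n)" unfolding P_def using indb by (intro bounded_mult_op) blast
      show "mat_mult (P n) (P n) = P n"
        unfolding P_def by (intro ext, simp only: mm_left) (simp add: mult_op_def ind_def)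
      show "mat_adj (P n) = P n"
        by (intro ext) (simp add: mat_adj_def Pent)
    qed
    show "finite_rank (P n)"
    proof -
      obtain e where e: "bij_betw e {0..<card (As n)} (As n)" using ex_bij_betw_nat_finite[OF finA] by blast
      have "\<forall>y. \<exists>c. \<forall>x. P n x y = (\<Sum>i<card (As n). c i * P n x (e i))"
      proof
        fix y
        show "\<exists>c. \<forall>x. P n x y = (\<Sum>i<card (As n). c i * P n x (e i))"
        proof (intro exI allI)
          fix x
          have "(\<Sum>i<card (As n). (if e i = y then 1 else 0) * P n x (e i)) = (\<Sum>i\<in>{0..<card (As n)}. (\<lambda>a. if a = y then P n x a else 0) (e i))"
            unfolding lessThan_atLeast0 by (intro sum.cong refl) simp
          also have "\<dots> = (\<Sum>a\<in>As n. if a = y then P n x a else 0)"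
            by (rule sum.reindex_bij_betw[OF e])
          also have "\<dots> = P n x y" using finA[of n] by (simp add: Pent)
          finally show "P n x y = (\<Sum>i<card (As n). (if e i = y then 1 else 0) * P n x (e i))" by simp
        qed
      qed
      note fr = this
      show ?thesis unfolding finite_rank_def
        apply (rule exI[of _ "card (As n)"])
        apply (rule exI[of _ "\<lambda>i x. P n x (e i)"])
        using fr apply simp
        done
    qed
    show "P n \<noteq> mat_zero"
    proof
      assume "P n = mat_zero"
      obtain a where "a \<in> As n" using neA by blast
      then have "P n a a = 1" by (simp add: Pent)
      then show False using \<open>P n = mat_zero\<close> unfolding mat_zero_def by simp
    qed
  next
    fix T assume T: "T \<in> R_X \<alpha>"
    then have g: "good As T" using RG by blast
    show "(\<lambda>n. hs_norm (mat_diff (mat_mult (P n) T) (mat_mult T (P n))) / hs_norm (P n)) \<longlonglongrightarrow> 0"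
    proof (rule LIMSEQ_I)
      fix r :: real assume r: "r > 0"
      have r2: "(r/2)\<^sup>2 > 0" using r by simp
      obtain N where N: "\<And>n. n \<ge> N \<Longrightarrow> cb (As n) T ((r/2)\<^sup>2 * real (card (As n)))"
        using goodE[OF g r2] by blast
      show "\<exists>no. \<forall>n\<ge>no. norm (hs_norm (mat_diff (mat_mult (P n) T) (mat_mult T (P n))) / hs_norm (P n) - 0) < r"
      proof (intro exI allI impI)
        fix n assume n: "N \<le> n"
        define c where "c = real (card (As n))"
        have c: "c > 0" unfolding c_def using finA[of n] neA[of n] by (simp add: card_gt_0_iff)
        define h where "h = hs_norm (mat_diff (mat_mult (P n) T) (mat_mult T (P n)))"
        have h0: "h \<ge> 0" unfolding h_def by (rule hs_nonneg)
        have hb: "h \<le> sqrt ((r/2)\<^sup>2 * c)" unfolding h_def c_def P_def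
          by (rule hs_comm[OF finA N[OF n]]) (simp)
        have hP: "hs_norm (P n) = sqrt c" unfolding P_def c_def by (rule hs_P[OF finA])
        have "sqrt ((r/2)\<^sup>2 * c) = r/2 * sqrt c" using r c by (simp add: real_sqrt_mult)
        then have "h / sqrt c \<le> r/2" using hb c by (simp add: divide_le_eq)
        then have "h / sqrt c < r" using r by linarith
        then show "norm (hs_norm (mat_diff (mat_mult (P n) T) (mat_mult T (P n))) / hs_norm (P n) - 0) < r"
          using h0 c unfolding hP h_def[symmetric] by simp
      qed
    qed
  qed
qed

end
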